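(* Let $Q=(G\leftleftarrows A)$ be a path-connected group-like graph. Then the associated graded Hopf algebra $(\mathcal D(Q)\xrightarrow{\phi_*}\mathcal D(G))$ in $\mathcal{LM}$ is an irreducible cocommutative Hopf algebra.
   Context: A group-like graph is a directed graph $(G\overset{s}{\underset{t}{\leftleftarrows}}A)$ with an associative multiplication from its Cartesian square to itself making $G$ a group, giving a two-sided $G$-action on $A$ with $s,t$ equivariant; path-connected means connected as an undirected graph. Over a field $\mathbf k$ of characteristic $0$, $(\mathbf k[A]\xrightarrow{\phi}\mathbf k[G])$, $\phi(a)=t(a)-s(a)$, is a Hopf algebra in the Loday–Pirashvili category $\mathcal{LM}$ (objects: linear maps $U\to V$; tensor product $(U\to V)\otimes(U'\to V')=(U\otimes V'+V\otimes U'\to V\otimes V')$) with the $\mathbf k[G]$-bimodule structure on $\mathbf k[A]$ induced by the $G$-action, coproduct $\Delta_0(g)=g\otimes g$, coaction $\Delta_1(a)=a\otimes t(a)+s(a)\otimes a$ into $\mathbf k[A]\otimes\mathbf k[G]+\mathbf k[G]\otimes\mathbf k[A]$, and antipode $S_0(g)=g^{-1}$, $S_1(a)=-s(a)^{-1}\cdot a\cdot t(a)^{-1}$. Let $I(G)$ be the augmentation ideal, $I^0(G)=\mathbf k[G]$, and $I^n(A)$ the span of $v_1\cdot a\cdot v_2$ with $a\in A$, $v_1\in I^k(G)$, $v_2\in I^{n-k}(G)$. These filtrations are respected by all structure maps, and $\phi(I^n(A))\subseteq I^{n+1}(G)$. Set $\mathcal D(G)=\bigoplus_n I^n(G)/I^{n+1}(G)$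 and $\mathcal D(Q)=\bigoplus_n I^n(A)/I^{n+1}(A)$, with induced graded Hopf algebra structure in $\mathcal{LM}$; the induced map $\phi_*:\mathcal D(Q)\to\mathcal D(G)$ raises degree by one. Cocommutative means that $\Delta_0$ is cocommutative and $\Delta_1$ is invariant under the flip $\mathcal D(Q)\otimes\mathcal D(G)+\mathcal D(G)\otimes\mathcal D(Q)\to\mathcal D(G)\otimes\mathcal D(Q)+\mathcal D(Q)\otimes\mathcal D(G)$; irreducible means that $\mathcal D(G)$ is an irreducible coalgebra. *)

theory Defs
  imports "HOL-Algebra.Group"
begin

text \<open>A group-like graph: a group G (vertices = carrier G), a set A of arrows with
 source/target maps s, t into carrier G, and a two-sided (unital, associative)
 G-action on A (the multiplication restricted to the arrows A x G and G x A of the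
 Cartesian square) such that s and t are equivariant.\<close>

definition group_like_graph ::
  "('g, 'm) monoid_scheme \<Rightarrow> 'a set \<Rightarrow> ('a \<Rightarrow> 'g) \<Rightarrow> ('a \<Rightarrow> 'g)
   \<Rightarrow> ('g \<Rightarrow> 'a \<Rightarrow> 'a) \<Rightarrow> ('a \<Rightarrow> 'g \<Rightarrow> 'a) \<Rightarrow> bool" where
  "group_like_graph G A s t lact ract \<longleftrightarrow>
     group G \<and>
     (\<forall>a\<in>A. s a \<in> carrier G \<and> t a \<in> carrier G) \<and>
     (\<forall>g\<in>carrier G. \<forall>a\<in>A. lact g a \<in> A \<and> ract a g \<in> A) \<and>
     (\<forall>a\<in>A. lact \<one>\<^bsub>G\<^esub> a = a \<and> ract a \<one>\<^bsub>G\<^esub> = a) \<and>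
     (\<forall>g\<in>carrier G. \<forall>h\<in>carrier G. \<forall>a\<in>A.
        lact (g \<otimes>\<^bsub>G\<^esub> h) a = lact g (lact h a) \<and>
        ract a (g \<otimes>\<^bsub>G\<^esub> h) = ract (ract a g) h \<and>
        ract (lact g a) h = lact g (ract a h)) \<and>
     (\<forall>g\<in>carrier G. \<forall>a\<in>A.
        s (lact g a) = g \<otimes>\<^bsub>G\<^esub> s a \<and> t (lact g a) = g \<otimes>\<^bsub>G\<^esub> t a \<and>
        s (ract a g) = s a \<otimes>\<^bsub>G\<^esub> g \<and> t (ract a g) = t a \<otimes>\<^bsub>G\<^esub> g)"

definition path_connected ::
  "('g, 'm) monoid_scheme \<Rightarrow> 'a set \<Rightarrow> ('a \<Rightarrow> 'g) \<Rightarrow> ('a \<Rightarrow> 'g) \<Rightarrow> bool" where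
  "path_connected G A s t \<longleftrightarrow>
     (\<forall>g\<in>carrier G. \<forall>h\<in>carrier G.
        (g, h) \<in> ({(s a, t a) | a. a \<in> A} \<union> {(t a, s a) | a. a \<in> A})\<^sup>*)"

definition supp :: "('b \<Rightarrow> 'k::zero) \<Rightarrow> 'b set" where
  "supp f = {x. f x \<noteq> 0}"

definition free :: "'b set \<Rightarrow> ('b \<Rightarrow> 'k::zero) set" where
  "free X = {f. finite (supp f) \<and> supp f \<subseteq> X}"

definition delta :: "'b \<Rightarrow> 'b \<Rightarrow> 'k::{zero,one}" where
  "delta x = (\<lambda>y. if y = x then 1 else 0)"

definition lspan :: "('b \<Rightarrow> 'k::field) set \<Rightarrow> ('b \<Rightarrow> 'k) set" where
  "lspan S = {f. \<exists>T r. finite T \<and> T \<subseteq> S \<and> f = (\<lambda>x. \<Sum>u\<in>T. r u * u x)}"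

text \<open>Tensor product of vectors: k[X] (x) k[Y] = k[X x Y].\<close>
definition tens :: "('b \<Rightarrow> 'k::field) \<Rightarrow> ('c \<Rightarrow> 'k) \<Rightarrow> ('b \<times> 'c \<Rightarrow> 'k)" where
  "tens u v = (\<lambda>(x, y). u x * v y)"

definition tspace :: "('b \<Rightarrow> 'k::field) set \<Rightarrow> ('c \<Rightarrow> 'k) set \<Rightarrow> ('b \<times> 'c \<Rightarrow> 'k) set" where
  "tspace U V = lspan {tens u v | u v. u \<in> U \<and> v \<in> V}"

definition gmul :: "('g, 'm) monoid_scheme \<Rightarrow> ('g \<Rightarrow> 'k::field) \<Rightarrow> ('g \<Rightarrow> 'k) \<Rightarrow> 'g \<Rightarrow> 'k" where
  "gmul G u v = (\<lambda>z. \<Sum>x\<in>supp u. \<Sum>y\<in>supp v. if x \<otimes>\<^bsub>G\<^esub> y = z then u x * v y else 0)"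

definition lmulA :: "('g \<Rightarrow> 'a \<Rightarrow> 'a) \<Rightarrow> ('g \<Rightarrow> 'k::field) \<Rightarrow> ('a \<Rightarrow> 'k) \<Rightarrow> 'a \<Rightarrow> 'k" where
  "lmulA lact v w = (\<lambda>b. \<Sum>g\<in>supp v. \<Sum>a\<in>supp w. if lact g a = b then v g * w a else 0)"

definition rmulA :: "('a \<Rightarrow> 'g \<Rightarrow> 'a) \<Rightarrow> ('a \<Rightarrow> 'k::field) \<Rightarrow> ('g \<Rightarrow> 'k) \<Rightarrow> 'a \<Rightarrow> 'k" where
  "rmulA ract w v = (\<lambda>b. \<Sum>a\<in>supp w. \<Sum>g\<in>supp v. if ract a g = b then w a * v g else 0)"

definition augI :: "('g, 'm) monoid_scheme \<Rightarrow> ('g \<Rightarrow> 'k::field) set" where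
  "augI G = {u \<in> free (carrier G). (\<Sum>x\<in>supp u. u x) = 0}"

fun IGpow :: "('g, 'm) monoid_scheme \<Rightarrow> nat \<Rightarrow> ('g \<Rightarrow> 'k::field) set" where
  "IGpow G 0 = free (carrier G)"
| "IGpow G (Suc n) = lspan {gmul G u v | u v. u \<in> IGpow G n \<and> v \<in> augI G}"

definition IApow :: "('g, 'm) monoid_scheme \<Rightarrow> 'a set \<Rightarrow> ('g \<Rightarrow> 'a \<Rightarrow> 'a) \<Rightarrow> ('a \<Rightarrow> 'g \<Rightarrow> 'a)
    \<Rightarrow> nat \<Rightarrow> ('a \<Rightarrow> 'k::field) set" where
  "IApow G A lact ract n = lspan {rmulA ract (lmulA lact v1 (delta a)) v2 | v1 v2 a k.
      k \<le> n \<and> a \<in> A \<and> v1 \<in> IGpow G k \<and> v2 \<in> IGpow G (n - k)}"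

text \<open>Ungraded coproduct on k[G] and coaction on k[A] (two components:
 k[A] (x) k[G] and k[G] (x) k[A]).\<close>
definition comulG :: "('g \<Rightarrow> 'k::field) \<Rightarrow> ('g \<times> 'g \<Rightarrow> 'k)" where
  "comulG u = (\<lambda>(g, h). if g = h then u g else 0)"

definition coactAG :: "('a \<Rightarrow> 'g) \<Rightarrow> ('a \<Rightarrow> 'k::field) \<Rightarrow> ('a \<times> 'g \<Rightarrow> 'k)" where
  "coactAG t u = (\<lambda>(a, g). if g = t a then u a else 0)"

definition coactGA :: "('a \<Rightarrow> 'g) \<Rightarrow> ('a \<Rightarrow> 'k::field) \<Rightarrow> ('g \<times> 'a \<Rightarrow> 'k)" where
  "coactGA s u = (\<lambda>(g, a). if g = s a then u a else 0)"

text \<open>A graded vector space gr(V) = (+)_n F^n/F^(n+1) for a decreasing filtration F is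
 represented by the space of representatives
   Rep F = {x : nat x X -> k finitely supported | each degree-n slice lies in F n},
 modulo Zer F = {x | each degree-n slice lies in F (n+1)}.
 A tensor product gr(V) (x) gr(W) is represented by functions on
 (nat x X) x (nat x Y), whose (p,q)-slice lies in F p (x) F' q, modulo those whose
 (p,q)-slice lies in F (p+1) (x) F' q + F p (x) F' (q+1).\<close>

definition slice :: "(nat \<times> 'b \<Rightarrow> 'k) \<Rightarrow> nat \<Rightarrow> 'b \<Rightarrow> 'k" where
  "slice x n = (\<lambda>b. x (n, b))"

definition slice2 :: "((nat \<times> 'b) \<times> (nat \<times> 'c) \<Rightarrow> 'k) \<Rightarrow> nat \<Rightarrow> nat \<Rightarrow> 'b \<times> 'c \<Rightarrow> 'k" where
  "slice2 y p q = (\<lambda>(b, c). y ((p, b), (q, c)))"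

definition grRep :: "(nat \<Rightarrow> ('b \<Rightarrow> 'k::field) set) \<Rightarrow> (nat \<times> 'b \<Rightarrow> 'k) set" where
  "grRep F = {x. finite (supp x) \<and> (\<forall>n. slice x n \<in> F n)}"

definition grZer :: "(nat \<Rightarrow> ('b \<Rightarrow> 'k::field) set) \<Rightarrow> (nat \<times> 'b \<Rightarrow> 'k) set" where
  "grZer F = {x. finite (supp x) \<and> (\<forall>n. slice x n \<in> F (Suc n))}"

definition tRep :: "(nat \<Rightarrow> ('b \<Rightarrow> 'k::field) set) \<Rightarrow> (nat \<Rightarrow> ('c \<Rightarrow> 'k) set)
    \<Rightarrow> ((nat \<times> 'b) \<times> (nat \<times> 'c) \<Rightarrow> 'k) set" where
  "tRep F F' = {y. finite (supp y) \<and> (\<forall>p q. slice2 y p q \<in> tspace (F p) (F' q))}"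

definition tZer :: "(nat \<Rightarrow> ('b \<Rightarrow> 'k::field) set) \<Rightarrow> (nat \<Rightarrow> ('c \<Rightarrow> 'k) set)
    \<Rightarrow> ((nat \<times> 'b) \<times> (nat \<times> 'c) \<Rightarrow> 'k) set" where
  "tZer F F' = {y. finite (supp y) \<and> (\<forall>p q. slice2 y p q \<in>
      lspan (tspace (F (Suc p)) (F' q) \<union> tspace (F p) (F' (Suc q))))}"

definition tFil :: "(nat \<Rightarrow> ('b \<Rightarrow> 'k::field) set) \<Rightarrow> (nat \<Rightarrow> ('c \<Rightarrow> 'k) set)
    \<Rightarrow> nat \<Rightarrow> ('b \<times> 'c \<Rightarrow> 'k) set" where
  "tFil F F' n = lspan (\<Union>p\<in>{0..n}. tspace (F p) (F' (n - p)))"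

text \<open>Induced graded map gr(V) -> gr(V (x) W) of a filtered map f with f(F n) in
 tFil n, via gr(V (x) W) = gr V (x) gr W: y represents the image of the class of x
 iff for every n the sum over p+q=n of the (p,q)-slices of y agrees with f applied to
 the degree-n slice of x modulo tFil (n+1).\<close>
definition induced_rel :: "(nat \<Rightarrow> ('b \<Rightarrow> 'k::field) set) \<Rightarrow> (nat \<Rightarrow> ('c \<Rightarrow> 'k) set)
    \<Rightarrow> (nat \<Rightarrow> ('d \<Rightarrow> 'k) set) \<Rightarrow> (('b \<Rightarrow> 'k) \<Rightarrow> ('c \<times> 'd \<Rightarrow> 'k))
    \<Rightarrow> (nat \<times> 'b \<Rightarrow> 'k) \<Rightarrow> ((nat \<times> 'c) \<times> (nat \<times> 'd) \<Rightarrow> 'k) \<Rightarrow> bool" where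
  "induced_rel F F1 F2 f x y \<longleftrightarrow> y \<in> tRep F1 F2 \<and>
     (\<forall>n. (\<lambda>z. (\<Sum>p\<in>{0..n}. slice2 y p (n - p) z) - f (slice x n) z) \<in> tFil F1 F2 (Suc n))"

text \<open>Subcoalgebras of D(G): represented by subspaces W with Zer \<subseteq> W \<subseteq> Rep whose
 coproduct lands in W (x) W (the span of the x (x) y with x, y in W, plus the zero
 representatives).\<close>
definition DG_subcoalgebra :: "('g, 'm) monoid_scheme \<Rightarrow> (nat \<times> 'g \<Rightarrow> 'k::field) set \<Rightarrow> bool" where
  "DG_subcoalgebra G W \<longleftrightarrow>
     grZer (IGpow G) \<subseteq> W \<and> W \<subseteq> grRep (IGpow G) \<and> lspan W = W \<and>
     (\<forall>x\<in>W. \<exists>y. induced_rel (IGpow G) (IGpow G) (IGpow G) comulG x y \<and>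
        y \<in> lspan ({tens u v | u v. u \<in> W \<and> v \<in> W} \<union> tZer (IGpow G) (IGpow G)))"

definition DG_irreducible :: "'k::field itself \<Rightarrow> ('g, 'm) monoid_scheme \<Rightarrow> bool" where
  "DG_irreducible TYPE('k) G \<longleftrightarrow>
     (\<forall>W1 W2 :: (nat \<times> 'g \<Rightarrow> 'k) set.
        DG_subcoalgebra G W1 \<and> DG_subcoalgebra G W2 \<and>
        W1 \<noteq> grZer (IGpow G) \<and> W2 \<noteq> grZer (IGpow G) \<longrightarrow>
        W1 \<inter> W2 \<noteq> grZer (IGpow G))"

definition DG_cocommutative :: "'k::field itself \<Rightarrow> ('g, 'm) monoid_scheme \<Rightarrow> bool" where
  "DG_cocommutative TYPE('k) G \<longleftrightarrow>
     (\<forall>(x :: nat \<times> 'g \<Rightarrow> 'k) \<in> grRep (IGpow G). \<forall>y.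
        induced_rel (IGpow G) (IGpow G) (IGpow G) comulG x y \<longrightarrow>
        (\<lambda>z. y (prod.swap z)) - y \<in> tZer (IGpow G) (IGpow G))"

text \<open>Delta_1 : D(Q) -> D(Q) (x) D(G) + D(G) (x) D(Q) is invariant under the flip
 D(Q) (x) D(G) + D(G) (x) D(Q) -> D(G) (x) D(Q) + D(Q) (x) D(G).\<close>
definition DQ_cocommutative :: "'k::field itself \<Rightarrow> ('g, 'm) monoid_scheme \<Rightarrow> 'a set
    \<Rightarrow> ('a \<Rightarrow> 'g) \<Rightarrow> ('a \<Rightarrow> 'g) \<Rightarrow> ('g \<Rightarrow> 'a \<Rightarrow> 'a) \<Rightarrow> ('a \<Rightarrow> 'g \<Rightarrow> 'a) \<Rightarrow> bool" where
  "DQ_cocommutative TYPE('k) G A s t lact ract \<longleftrightarrow>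
     (\<forall>(x :: nat \<times> 'a \<Rightarrow> 'k) \<in> grRep (IApow G A lact ract). \<forall>y1 y2.
        induced_rel (IApow G A lact ract) (IApow G A lact ract) (IGpow G) (coactAG t) x y1 \<and>
        induced_rel (IApow G A lact ract) (IGpow G) (IApow G A lact ract) (coactGA s) x y2 \<longrightarrow>
        (\<lambda>z. y2 (prod.swap z)) - y1 \<in> tZer (IApow G A lact ract) (IGpow G) \<and>
        (\<lambda>z. y1 (prod.swap z)) - y2 \<in> tZer (IGpow G) (IApow G A lact ract))"

end

theory Submission
  imports Defs "HOL-Library.Function_Algebras" "HOL.Vector_Spaces"
begin

declare plus_fun_apply[simp del] zero_fun_apply[simp del] times_fun_apply[simp del] one_fun_apply[simp del]
  minus_apply[simp del] uminus_apply[simp del]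

lemmas fs = plus_fun_apply zero_fun_apply minus_apply uminus_apply

definition sc :: "'k::field \<Rightarrow> ('b \<Rightarrow> 'k) \<Rightarrow> 'b \<Rightarrow> 'k" where
  "sc c f = (\<lambda>x. c * f x)"

lemma sc_apply: "sc c f x = c * f x" by (simp add: sc_def)
lemmas fss = fs sc_apply

interpretation fvs: vector_space "sc :: 'k::field \<Rightarrow> ('b \<Rightarrow> 'k) \<Rightarrow> 'b \<Rightarrow> 'k"
  by unfold_locales (auto simp: sc_def fun_eq_iff algebra_simps fs)

interpretation kvs: vector_space "(*) :: 'k::field \<Rightarrow> 'k \<Rightarrow> 'k"
  by unfold_locales (auto simp: algebra_simps)

lemma sum_fun_apply: "(\<Sum>u\<in>T. f u) x = (\<Sum>u\<in>T. f u x)"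
  by (induction T rule: infinite_finite_induct) (auto simp: fs)

lemma lspan_eq: "lspan S = fvs.span S"
  unfolding lspan_def fvs.span_explicit
  by (auto simp: sum_fun_apply sc_def fun_eq_iff)

definition fin :: "('b \<Rightarrow> 'k::field) set" where "fin = {f. finite (supp f)}"

definition lin :: "('b \<Rightarrow> 'c \<Rightarrow> 'k::field) \<Rightarrow> ('b \<Rightarrow> 'k) \<Rightarrow> 'c \<Rightarrow> 'k" where
  "lin \<phi> u = (\<lambda>z. \<Sum>x\<in>supp u. u x * \<phi> x z)"

lemma supp_iff[simp]: "x \<in> supp f \<longleftrightarrow> f x \<noteq> 0" by (simp add: supp_def)

lemma fin_iff: "f \<in> fin \<longleftrightarrow> finite (supp f)" by (simp add: fin_def)

lemma supp_add: "supp (u + (v::'b \<Rightarrow> 'k::field)) \<subseteq> supp u \<union> supp v" by (auto simp: supp_def fss)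
lemma supp_diff: "supp (u - (v::'b \<Rightarrow> 'k::field)) \<subseteq> supp u \<union> supp v" by (auto simp: supp_def fss)
lemma supp_uminus[simp]: "supp (- (u::'b \<Rightarrow> 'k::field)) = supp u" by (auto simp: supp_def fss)
lemma supp_sc: "supp (sc c u) \<subseteq> supp u" by (auto simp: supp_def fss)
lemma supp_zero[simp]: "supp (0::'b \<Rightarrow> 'k::field) = {}" by (auto simp: supp_def fss)
lemma supp_delta[simp]: "supp (delta x :: 'b \<Rightarrow> 'k::field) = {x}" by (auto simp: supp_def delta_def)

lemma fin_add[intro]: "u \<in> fin \<Longrightarrow> v \<in> fin \<Longrightarrow> u + v \<in> fin"
  unfolding fin_iff by (meson finite_Un finite_subset supp_add)
lemma fin_diff[intro]: "u \<in> fin \<Longrightarrow> v \<in> fin \<Longrightarrow> u - v \<in> fin"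
  unfolding fin_iff by (meson finite_Un finite_subset supp_diff)
lemma fin_uminus[intro]: "u \<in> fin \<Longrightarrow> - u \<in> fin" unfolding fin_iff by simp
lemma fin_sc[intro]: "u \<in> fin \<Longrightarrow> sc c u \<in> fin"
  unfolding fin_iff by (meson finite_subset supp_sc)
lemma fin_zero[intro, simp]: "0 \<in> fin" unfolding fin_iff by simp
lemma fin_delta[intro, simp]: "delta x \<in> fin" unfolding fin_iff by simp
lemma fin_sum[intro]: "(\<And>i. i \<in> I \<Longrightarrow> w i \<in> fin) \<Longrightarrow> (\<Sum>i\<in>I. w i) \<in> fin"
  by (induction I rule: infinite_finite_induct) auto

lemma fin_subspace: "fvs.subspace fin"
  unfolding fvs.subspace_def by auto

lemma lin_superset:
  assumes "finite S" "supp u \<subseteq> S"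
  shows "lin \<phi> u = (\<lambda>z. \<Sum>x\<in>S. u x * \<phi> x z)"
  unfolding lin_def
proof
  fix z show "(\<Sum>x\<in>supp u. u x * \<phi> x z) = (\<Sum>x\<in>S. u x * \<phi> x z)"
    by (rule sum.mono_neutral_left) (use assms in auto)
qed

lemma lin_as_sum: "lin \<phi> u = (\<Sum>x\<in>supp u. sc (u x) (\<phi> x))"
  by (simp add: lin_def fun_eq_iff sum_fun_apply fss)

lemma lin_add: "u \<in> fin \<Longrightarrow> v \<in> fin \<Longrightarrow> lin \<phi> (u + v) = lin \<phi> u + lin \<phi> v"
proof -
  assume u: "u \<in> fin" and v: "v \<in> fin"
  let ?S = "supp u \<union> supp v"
  have f: "finite ?S" using u v by (simp add: fin_iff)
  have "lin \<phi> (u + v) = (\<lambda>z. \<Sum>x\<in>?S. (u + v) x * \<phi> x z)"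
    by (rule lin_superset[OF f supp_add])
  also have "\<dots> = (\<lambda>z. \<Sum>x\<in>?S. u x * \<phi> x z) + (\<lambda>z. \<Sum>x\<in>?S. v x * \<phi> x z)"
    by (simp add: fun_eq_iff distrib_right sum.distrib fss)
  also have "\<dots> = lin \<phi> u + lin \<phi> v"
    by (subst (1 2) lin_superset[OF f]) auto
  finally show ?thesis .
qed

lemma lin_sc: "lin \<phi> (sc c u) = sc c (lin \<phi> u)"
proof (cases "c = 0")
  case True
  have "supp (sc c u) = {}" using True by (simp add: supp_def fss)
  show ?thesis
  proof
    fix z show "lin \<phi> (sc c u) z = sc c (lin \<phi> u) z"
      unfolding lin_def sc_apply \<open>supp (sc c u) = {}\<close> using True by simp
  qed
next
  case False
  then have e: "supp (sc c u) = supp u" by (auto simp: supp_def sc_apply)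
  show ?thesis
  proof
    fix z
    have "lin \<phi> (sc c u) z = (\<Sum>x\<in>supp u. (c * u x) * \<phi> x z)"
      unfolding lin_def e by (simp add: sc_apply)
    also have "\<dots> = c * (\<Sum>x\<in>supp u. u x * \<phi> x z)"
      unfolding sum_distrib_left mult.assoc ..
    finally show "lin \<phi> (sc c u) z = sc c (lin \<phi> u) z" by (simp add: lin_def sc_apply)
  qed
qed
lemma lin_zero[simp]: "lin \<phi> 0 = 0" by (simp add: lin_def fun_eq_iff fs)

lemma lin_delta[simp]: "lin \<phi> (delta x) = \<phi> x"
  unfolding lin_def supp_delta by (simp add: delta_def)

lemma lin_fin: "u \<in> fin \<Longrightarrow> (\<And>x. x \<in> supp u \<Longrightarrow> \<phi> x \<in> fin) \<Longrightarrow> lin \<phi> u \<in> fin"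
  unfolding lin_as_sum by (intro fin_sum fin_sc) auto

lemma lin_expand: "u \<in> fin \<Longrightarrow> lin delta u = u"
proof -
  assume u: "u \<in> fin"
  show ?thesis unfolding lin_def fun_eq_iff delta_def
  proof
    fix z
    have "(\<Sum>x\<in>supp u. u x * (if z = x then 1 else 0)) = (\<Sum>x\<in>supp u. if x = z then u x else 0)"
      by (rule sum.cong) auto
    also have "\<dots> = u z" using u by (auto simp: fin_iff)
    finally show "(\<Sum>x\<in>supp u. u x * (if z = x then 1 else 0)) = u z" .
  qed
qed

definition flin :: "(('b \<Rightarrow> 'k::field) \<Rightarrow> ('c \<Rightarrow> 'k)) \<Rightarrow> bool" where
  "flin L \<longleftrightarrow> (\<forall>u\<in>fin. \<forall>v\<in>fin. L (u + v) = L u + L v) \<and> (\<forall>u\<in>fin. \<forall>c. L (sc c u) = sc c (L u))"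

lemma flin_lin: "flin (lin \<phi>)" by (simp add: flin_def lin_add lin_sc)

lemma flin_zero: "flin L \<Longrightarrow> L 0 = 0"
  unfolding flin_def by (metis fin_zero fvs.scale_zero_left)

lemma flin_add: "flin L \<Longrightarrow> u \<in> fin \<Longrightarrow> v \<in> fin \<Longrightarrow> L (u + v) = L u + L v"
  unfolding flin_def by blast

lemma flin_sc: "flin L \<Longrightarrow> u \<in> fin \<Longrightarrow> L (sc c u) = sc c (L u)"
  unfolding flin_def by blast

lemma flin_sum: "flin L \<Longrightarrow> (\<And>i. i \<in> I \<Longrightarrow> w i \<in> fin) \<Longrightarrow>
    L (\<Sum>i\<in>I. sc (c i) (w i)) = (\<Sum>i\<in>I. sc (c i) (L (w i)))"
proof (induction I rule: infinite_finite_induct)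
  case (insert x F)
  have f1: "sc (c x) (w x) \<in> fin" using insert by auto
  have f2: "(\<Sum>i\<in>F. sc (c i) (w i)) \<in> fin" using insert by (intro fin_sum) auto
  have "L (\<Sum>i\<in>insert x F. sc (c i) (w i)) = L (sc (c x) (w x) + (\<Sum>i\<in>F. sc (c i) (w i)))"
    using insert by (intro arg_cong[where f=L] sum.insert) auto
  also have "\<dots> = L (sc (c x) (w x)) + L (\<Sum>i\<in>F. sc (c i) (w i))"
    by (rule flin_add[OF insert.prems(1) f1 f2])
  also have "\<dots> = sc (c x) (L (w x)) + (\<Sum>i\<in>F. sc (c i) (L (w i)))"
    using insert flin_sc[OF insert.prems(1)] by auto
  also have "\<dots> = (\<Sum>i\<in>insert x F. sc (c i) (L (w i)))"
    using insert by (intro sum.insert[symmetric]) auto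
  finally show ?case .
qed (auto simp: flin_zero)

lemma flin_lin_apply: "flin L \<Longrightarrow> u \<in> fin \<Longrightarrow> (\<And>x. \<phi> x \<in> fin) \<Longrightarrow> L (lin \<phi> u) = lin (\<lambda>x. L (\<phi> x)) u"
  unfolding lin_as_sum by (simp add: flin_sum)

lemma lin_lin: "u \<in> fin \<Longrightarrow> (\<And>x. \<psi> x \<in> fin) \<Longrightarrow> lin \<phi> (lin \<psi> u) = lin (\<lambda>x. lin \<phi> (\<psi> x)) u"
  by (rule flin_lin_apply[OF flin_lin])

lemma flin_diff: "flin L \<Longrightarrow> u \<in> fin \<Longrightarrow> v \<in> fin \<Longrightarrow> L (u - v) = L u - L v"
proof -
  assume L: "flin L" and u: "u \<in> fin" and v: "v \<in> fin"
  have "L u = L ((u - v) + v)" by simp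
  also have "\<dots> = L (u - v) + L v" by (rule flin_add[OF L fin_diff[OF u v] v])
  finally show ?thesis by (simp add: algebra_simps)
qed

lemma flin_span:
  assumes L: "flin L" and S: "S \<subseteq> fin" and V: "fvs.subspace V" and LS: "\<And>x. x \<in> S \<Longrightarrow> L x \<in> V"
    and x: "x \<in> fvs.span S"
  shows "L x \<in> V"
proof -
  have "x \<in> fin \<and> L x \<in> V" using x
  proof (induction rule: fvs.span_induct_alt)
    case base
    have "L 0 \<in> V" unfolding flin_zero[OF L] by (rule fvs.subspace_0[OF V])
    then show ?case using fin_zero by blast
  next
    case (step c x y)
    have xf: "x \<in> fin" using S step by auto
    have e: "L (sc c x + y) = sc c (L x) + L y" using L xf step by (auto simp: flin_def fin_sc)
    have "sc c (L x) + L y \<in> V"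
      by (rule fvs.subspace_add[OF V fvs.subspace_scale[OF V LS[OF step(1)]]]) (use step in auto)
    then show ?case using step xf e by auto
  qed
  then show ?thesis by simp
qed

lemma span_fin: "S \<subseteq> fin \<Longrightarrow> fvs.span S \<subseteq> fin"
  using fvs.span_minimal fin_subspace by blast

interpretation fvp: vector_space_pair "sc :: 'k::field \<Rightarrow> ('b \<Rightarrow> 'k) \<Rightarrow> 'b \<Rightarrow> 'k" "sc :: 'k \<Rightarrow> ('c \<Rightarrow> 'k) \<Rightarrow> 'c \<Rightarrow> 'k"
  by unfold_locales

interpretation fkp: vector_space_pair "sc :: 'k::field \<Rightarrow> ('b \<Rightarrow> 'k) \<Rightarrow> 'b \<Rightarrow> 'k" "(*) :: 'k \<Rightarrow> 'k \<Rightarrow> 'k"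
  by unfold_locales

lemma linear_flin: "Vector_Spaces.linear sc sc L \<Longrightarrow> flin L"
  unfolding flin_def linear_iff by auto

lemma lin_fun_cong: "(\<And>x. x \<in> supp u \<Longrightarrow> \<phi> x = \<psi> x) \<Longrightarrow> lin \<phi> u = lin \<psi> u"
  unfolding lin_def by (intro ext sum.cong) auto

section \<open>Tensors\<close>

lemma tens_apply: "tens u v (x, y) = u x * v y" by (simp add: tens_def)

lemma supp_tens: "supp (tens u v) = supp u \<times> supp (v::'c \<Rightarrow> 'k::field)"
  by (auto simp: supp_def tens_def)

lemma fin_tens[intro]: "u \<in> fin \<Longrightarrow> v \<in> fin \<Longrightarrow> tens u v \<in> fin"
  unfolding fin_iff supp_tens by simp

lemma tens_add1: "tens (u + u') v = tens u v + tens u' v"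
  by (simp add: tens_def fun_eq_iff fs distrib_right split: prod.split)
lemma tens_add2: "tens u (v + v') = tens u v + tens u v'"
  by (simp add: tens_def fun_eq_iff fs distrib_left split: prod.split)
lemma tens_diff1: "tens (u - u') v = tens u v - tens u' v"
  by (simp add: tens_def fun_eq_iff fs left_diff_distrib split: prod.split)
lemma tens_diff2: "tens u (v - v') = tens u v - tens u v'"
  by (simp add: tens_def fun_eq_iff fs right_diff_distrib split: prod.split)
lemma tens_sc1: "tens (sc c u) v = sc c (tens u v)"
  by (rule ext, clarify) (simp only: tens_apply sc_apply mult.assoc)
lemma tens_sc2: "tens u (sc c v) = sc c (tens u v)"
  by (rule ext, clarify) (simp only: tens_apply sc_apply mult.left_commute)
lemma tens_zero1[simp]: "tens 0 v = 0"
  by (simp add: tens_def fun_eq_iff fs split: prod.split)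
lemma tens_zero2[simp]: "tens u 0 = 0"
  by (simp add: tens_def fun_eq_iff fs split: prod.split)

lemma tens_lin: "tens (lin \<alpha> u) (lin \<beta> v) = lin (\<lambda>x. lin (\<lambda>y. tens (\<alpha> x) (\<beta> y)) v) u"
proof (rule ext, clarify)
  fix a b
  show "tens (lin \<alpha> u) (lin \<beta> v) (a, b) = lin (\<lambda>x. lin (\<lambda>y. tens (\<alpha> x) (\<beta> y)) v) u (a, b)"
    unfolding tens_apply lin_def
    apply (simp only: sum_product)
    apply (intro sum.cong refl)
    apply (simp only: sum_distrib_left)
    apply (intro sum.cong refl)
    apply (simp only: ac_simps)
    done
qed

lemma tens_delta: "tens (delta x) (delta y) = (delta (x, y) :: _ \<Rightarrow> 'k::field)"
  by (rule ext, clarify) (simp add: tens_apply delta_def)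

lemma tens_as_lin: "u \<in> fin \<Longrightarrow> v \<in> fin \<Longrightarrow> tens u v = lin (\<lambda>x. lin (\<lambda>y. delta (x, y)) v) u"
proof -
  assume u: "u \<in> fin" and v: "v \<in> fin"
  have "tens u v = tens (lin delta u) (lin delta v)" using u v by (simp add: lin_expand)
  also have "\<dots> = lin (\<lambda>x. lin (\<lambda>y. tens (delta x) (delta y)) v) u" by (rule tens_lin)
  also have "\<dots> = lin (\<lambda>x. lin (\<lambda>y. delta (x, y)) v) u"
    by (simp only: tens_delta)
  finally show ?thesis .
qed

lemma tspace_subspace: "fvs.subspace (tspace U V)"
  unfolding tspace_def lspan_eq by simp

lemma tens_in_tspace: "u \<in> U \<Longrightarrow> v \<in> V \<Longrightarrow> tens u v \<in> tspace U V"
  unfolding tspace_def lspan_eq by (rule fvs.span_base) blast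

lemma tspace_fin: "U \<subseteq> fin \<Longrightarrow> V \<subseteq> fin \<Longrightarrow> tspace U V \<subseteq> fin"
  unfolding tspace_def lspan_eq by (rule span_fin) auto

lemma tspace_mono: "U \<subseteq> U' \<Longrightarrow> V \<subseteq> V' \<Longrightarrow> tspace U V \<subseteq> tspace U' V'"
  unfolding tspace_def lspan_eq by (rule fvs.span_mono) blast

lemma tspace_map:
  assumes L: "flin L" and U: "U \<subseteq> fin" and V: "V \<subseteq> fin" and W: "fvs.subspace W"
    and gen: "\<And>u v. u \<in> U \<Longrightarrow> v \<in> V \<Longrightarrow> L (tens u v) \<in> W"
    and w: "w \<in> tspace U V"
  shows "L w \<in> W"
proof (rule flin_span[OF L _ W])
  show "{tens u v |u v. u \<in> U \<and> v \<in> V} \<subseteq> fin" using U V by auto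
  show "w \<in> fvs.span {tens u v |u v. u \<in> U \<and> v \<in> V}" using w unfolding tspace_def lspan_eq .
qed (use gen in auto)

definition tmap :: "(('b \<Rightarrow> 'k::field) \<Rightarrow> ('b \<Rightarrow> 'k)) \<Rightarrow> (('c \<Rightarrow> 'k) \<Rightarrow> ('c \<Rightarrow> 'k))
   \<Rightarrow> ('b \<times> 'c \<Rightarrow> 'k) \<Rightarrow> ('b \<times> 'c \<Rightarrow> 'k)" where
  "tmap \<pi> \<pi>' = lin (\<lambda>xy. tens (\<pi> (delta (fst xy))) (\<pi>' (delta (snd xy))))"

lemma flin_apply_lin: "flin L \<Longrightarrow> u \<in> fin \<Longrightarrow> L u = lin (\<lambda>x. L (delta x)) u"
  using flin_lin_apply[of L u delta] by (simp add: lin_expand)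

lemma tmap_tens:
  assumes p: "flin \<pi>" and p': "flin \<pi>'" and u: "u \<in> fin" and v: "v \<in> fin"
  shows "tmap \<pi> \<pi>' (tens u v) = tens (\<pi> u) (\<pi>' v)"
proof -
  have "tmap \<pi> \<pi>' (tens u v) = lin (\<lambda>x. tmap \<pi> \<pi>' (lin (\<lambda>y. delta (x, y)) v)) u"
    unfolding tens_as_lin[OF u v] tmap_def by (rule lin_lin[OF u]) (use v in \<open>auto intro!: lin_fin\<close>)
  also have "\<dots> = lin (\<lambda>x. lin (\<lambda>y. tens (\<pi> (delta x)) (\<pi>' (delta y))) v) u"
    unfolding tmap_def by (intro lin_fun_cong, subst lin_lin[OF v]) auto
  also have "\<dots> = tens (lin (\<lambda>x. \<pi> (delta x)) u) (lin (\<lambda>y. \<pi>' (delta y)) v)"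
    by (rule tens_lin[symmetric])
  also have "\<dots> = tens (\<pi> u) (\<pi>' v)"
    using flin_apply_lin[OF p u] flin_apply_lin[OF p' v] by simp
  finally show ?thesis .
qed

lemma linearD:
  assumes "Vector_Spaces.linear sc sc \<pi>"
  shows "\<pi> (x + y) = \<pi> x + \<pi> y" "\<pi> (sc c x) = sc c (\<pi> x)" "\<pi> 0 = 0"
proof -
  show a: "\<pi> (x + y) = \<pi> x + \<pi> y" "\<pi> (sc c x) = sc c (\<pi> x)" using assms unfolding linear_iff by auto
  show "\<pi> 0 = 0" using assms unfolding linear_iff by (metis fvs.scale_zero_left)
qed

lemma proj_exists:
  fixes A B :: "('b \<Rightarrow> 'k::field) set"
  assumes A: "fvs.subspace A" and B: "fvs.subspace B" and BA: "B \<subseteq> A"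
  obtains \<pi> :: "('b \<Rightarrow> 'k) \<Rightarrow> ('b \<Rightarrow> 'k)" where "Vector_Spaces.linear sc sc \<pi>" "\<And>u. u \<in> B \<Longrightarrow> \<pi> u = 0"
    "\<And>u. u \<in> A \<Longrightarrow> \<pi> u \<in> A" "\<And>u. u \<in> A \<Longrightarrow> u - \<pi> u \<in> B"
proof -
  obtain B1 where B1: "B1 \<subseteq> B" "fvs.independent B1" "B \<subseteq> fvs.span B1"
    by (rule fvs.maximal_independent_subset)
  obtain B2 where B2: "B1 \<subseteq> B2" "B2 \<subseteq> A" "fvs.independent B2" "A \<subseteq> fvs.span B2"
    by (rule fvs.maximal_independent_subset_extend[of B1 A]) (use B1 BA in auto)
  define \<pi> :: "('b \<Rightarrow> 'k) \<Rightarrow> ('b \<Rightarrow> 'k)" where "\<pi> = fvp.construct B2 (\<lambda>b. if b \<in> B1 then 0 else b)"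
  have lin: "Vector_Spaces.linear sc sc \<pi>" unfolding \<pi>_def by (rule fvp.linear_construct[OF B2(3)])
  have pb: "\<pi> b = (if b \<in> B1 then 0 else b)" if "b \<in> B2" for b
    unfolding \<pi>_def by (rule fvp.construct_basis[OF B2(3) that])
  have span1: "fvs.span B1 \<subseteq> B" using B1 B fvs.span_minimal by blast
  have span2: "fvs.span B2 \<subseteq> A" using B2 A fvs.span_minimal by blast
  have z: "\<pi> u = 0" if "u \<in> B" for u
  proof -
    have "u \<in> fvs.span B1" using that B1 by auto
    then show ?thesis
    proof (induction rule: fvs.span_induct_alt)
      case base then show ?case using linearD(3)[OF lin] .
    next
      case (step c x y)
      have "\<pi> x = 0" using pb[of x] step B2 by auto
      then show ?case using step linearD[OF lin] by simp
    qed
  qed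
  have r: "\<pi> u \<in> A \<and> u - \<pi> u \<in> B" if "u \<in> A" for u
  proof -
    have "u \<in> fvs.span B2" using that B2 by auto
    then have "\<pi> u \<in> fvs.span B2 \<and> u - \<pi> u \<in> fvs.span B1"
    proof (induction rule: fvs.span_induct_alt)
      case base then show ?case using linearD(3)[OF lin] by (simp add: fvs.span_zero)
    next
      case (step c x y)
      have px: "\<pi> x \<in> fvs.span B2" using pb[of x] step by (auto simp: fvs.span_zero fvs.span_base)
      have px2: "x - \<pi> x \<in> fvs.span B1" using pb[of x] step by (auto simp: fvs.span_zero fvs.span_base)
      have e1: "\<pi> (sc c x + y) = sc c (\<pi> x) + \<pi> y" using linearD[OF lin] by simp
      have e2: "sc c x + y - \<pi> (sc c x + y) = sc c (x - \<pi> x) + (y - \<pi> y)"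
        unfolding e1 by (simp add: fvs.scale_right_diff_distrib algebra_simps)
      have h1: "sc c (x - \<pi> x) + (y - \<pi> y) \<in> fvs.span B1"
        using step px2 by (auto intro!: fvs.span_add fvs.span_scale)
      have h2: "sc c (\<pi> x) + \<pi> y \<in> fvs.span B2"
        using step px by (auto intro!: fvs.span_add fvs.span_scale)
      show ?case
      proof
        show "\<pi> (sc c x + y) \<in> fvs.span B2" unfolding e1 by (rule h2)
        show "sc c x + y - \<pi> (sc c x + y) \<in> fvs.span B1" unfolding e2 by (rule h1)
      qed
    qed
    then show ?thesis using span1 span2 by auto
  qed
  show ?thesis by (rule that[OF lin z]) (use r in auto)
qed

definition filt :: "(nat \<Rightarrow> ('b \<Rightarrow> 'k::field) set) \<Rightarrow> bool" where
  "filt F \<longleftrightarrow> (\<forall>p. fvs.subspace (F p) \<and> F (Suc p) \<subseteq> F p \<and> F p \<subseteq> fin)"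

lemma filt_sub: "filt F \<Longrightarrow> fvs.subspace (F p)" unfolding filt_def by blast
lemma filt_fin: "filt F \<Longrightarrow> F p \<subseteq> fin" unfolding filt_def by blast
lemma filt_anti: assumes "filt F" "p \<le> q" shows "F q \<subseteq> F p"
  using assms(2)
proof (induction q rule: dec_induct)
  case (step q) then show ?case using assms(1) unfolding filt_def by blast
qed auto

lemma flin_id: "flin (\<lambda>w. w)" by (simp add: flin_def)
lemma flin_minus: "flin L1 \<Longrightarrow> flin L2 \<Longrightarrow> flin (\<lambda>w. L1 w - L2 w)"
  unfolding flin_def by (simp add: algebra_simps fvs.scale_right_diff_distrib)

lemma flin_sum1: "flin L \<Longrightarrow> (\<And>i. i \<in> I \<Longrightarrow> w i \<in> fin) \<Longrightarrow> L (\<Sum>i\<in>I. w i) = (\<Sum>i\<in>I. L (w i))"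
  using flin_sum[of L I w "\<lambda>_. 1"] by simp

lemma tens_sub_split: "tens u v - tens a b = tens (u - a) v + tens a (v - b)"
  by (simp add: tens_diff1 tens_diff2)

lemma tmap_kill:
  assumes p: "flin \<pi>" and p': "flin \<pi>'" and U: "U \<subseteq> fin" and V: "V \<subseteq> fin"
    and k: "(\<forall>u\<in>U. \<pi> u = 0) \<or> (\<forall>v\<in>V. \<pi>' v = 0)" and w: "w \<in> tspace U V"
  shows "tmap \<pi> \<pi>' w = 0"
proof -
  have "tmap \<pi> \<pi>' w \<in> {0}"
  proof (rule tspace_map[OF _ U V fvs.subspace_single_0 _ w])
    show "flin (tmap \<pi> \<pi>')" unfolding tmap_def by (rule flin_lin)
    fix u v assume uv: "u \<in> U" "v \<in> V"
    have uf: "u \<in> fin" and vf: "v \<in> fin" using uv U V by auto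
    show "tmap \<pi> \<pi>' (tens u v) \<in> {0}" using k uv by (auto simp: tmap_tens[OF p p' uf vf])
  qed
  then show ?thesis by simp
qed

lemma KL:
  assumes F: "filt F" and F': "filt F'"
    and d: "\<And>p. p \<le> n \<Longrightarrow> d p \<in> tspace (F p) (F' (n - p))"
    and S: "(\<Sum>p\<in>{0..n}. d p) \<in> tFil F F' (Suc n)"
    and p: "p \<le> n"
  shows "d p \<in> lspan (tspace (F (Suc p)) (F' (n - p)) \<union> tspace (F p) (F' (Suc (n - p))))"
proof -
  define q where "q = n - p"
  obtain \<pi> where pi: "Vector_Spaces.linear sc sc \<pi>" "\<And>u. u \<in> F (Suc p) \<Longrightarrow> \<pi> u = 0"
    "\<And>u. u \<in> F p \<Longrightarrow> \<pi> u \<in> F p" "\<And>u. u \<in> F p \<Longrightarrow> u - \<pi> u \<in> F (Suc p)"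
    by (rule proj_exists[of "F p" "F (Suc p)"]) (use F in \<open>auto simp: filt_def\<close>)
  obtain \<pi>' where pi': "Vector_Spaces.linear sc sc \<pi>'" "\<And>u. u \<in> F' (Suc q) \<Longrightarrow> \<pi>' u = 0"
    "\<And>u. u \<in> F' q \<Longrightarrow> \<pi>' u \<in> F' q" "\<And>u. u \<in> F' q \<Longrightarrow> u - \<pi>' u \<in> F' (Suc q)"
    by (rule proj_exists[of "F' q" "F' (Suc q)"]) (use F' in \<open>auto simp: filt_def\<close>)
  have fp: "flin \<pi>" "flin \<pi>'" using pi(1) pi'(1) by (auto intro: linear_flin)
  define T where "T = tmap \<pi> \<pi>'"
  have fT: "flin T" unfolding T_def tmap_def by (rule flin_lin)
  have Ffin: "\<And>p. F p \<subseteq> fin" "\<And>p. F' p \<subseteq> fin" using F F' by (auto simp: filt_fin)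
  have kill: "T w = 0" if "w \<in> tspace (F a) (F' b)" "Suc p \<le> a \<or> Suc q \<le> b" for w a b
    unfolding T_def
  proof (rule tmap_kill[OF fp Ffin(1) Ffin(2) _ that(1)])
    show "(\<forall>u\<in>F a. \<pi> u = 0) \<or> (\<forall>v\<in>F' b. \<pi>' v = 0)"
      using that(2) filt_anti[OF F, of "Suc p" a] filt_anti[OF F', of "Suc q" b] pi(2) pi'(2) by blast
  qed
  have dfin: "d p' \<in> fin" if "p' \<le> n" for p'
    using d[OF that] tspace_fin[OF Ffin] by blast
  have T1: "T (\<Sum>p'\<in>{0..n}. d p') = T (d p)"
  proof -
    have z: "(\<Sum>p'\<in>{0..n} - {p}. T (d p')) = 0"
    proof (rule sum.neutral, rule ballI)
      fix p' assume "p' \<in> {0..n} - {p}"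
      then have h: "p' \<le> n" "p' \<noteq> p" by auto
      have "Suc p \<le> p' \<or> Suc q \<le> n - p'" using h q_def p by linarith
      then show "T (d p') = 0" using kill[OF d[OF h(1)]] by auto
    qed
    have "T (\<Sum>p'\<in>{0..n}. d p') = (\<Sum>p'\<in>{0..n}. T (d p'))"
      by (rule flin_sum1[OF fT]) (use dfin in auto)
    also have "\<dots> = T (d p) + (\<Sum>p'\<in>{0..n} - {p}. T (d p'))"
      using p by (subst sum.remove[of _ p]) auto
    finally show ?thesis using z by simp
  qed
  have T2: "T (\<Sum>p'\<in>{0..n}. d p') = 0"
  proof -
    have "T (\<Sum>p'\<in>{0..n}. d p') \<in> {0}"
    proof (rule flin_span[OF fT _ fvs.subspace_single_0])
      show "(\<Sum>p'\<in>{0..n}. d p') \<in> fvs.span (\<Union>p''\<in>{0..Suc n}. tspace (F p'') (F' (Suc n - p'')))"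
        using S unfolding tFil_def lspan_eq .
      show "(\<Union>p''\<in>{0..Suc n}. tspace (F p'') (F' (Suc n - p''))) \<subseteq> fin"
        using tspace_fin[OF Ffin] by blast
      fix x assume "x \<in> (\<Union>p''\<in>{0..Suc n}. tspace (F p'') (F' (Suc n - p'')))"
      then obtain p'' where "p'' \<le> Suc n" "x \<in> tspace (F p'') (F' (Suc n - p''))" by auto
      moreover have "Suc p \<le> p'' \<or> Suc q \<le> Suc n - p''" using q_def p by linarith
      ultimately show "T x \<in> {0}" using kill[of x p'' "Suc n - p''"] by auto
    qed
    then show ?thesis by simp
  qed
  define Z where "Z = fvs.span (tspace (F (Suc p)) (F' q) \<union> tspace (F p) (F' (Suc q)))"
  have "d p - T (d p) \<in> Z"
  proof (rule tspace_map[OF flin_minus[OF flin_id fT] Ffin(1) Ffin(2) _ _ d[OF p]])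
    show "fvs.subspace Z" unfolding Z_def by simp
    fix u v assume u: "u \<in> F p" and v: "v \<in> F' (n - p)"
    have uf: "u \<in> fin" and vf: "v \<in> fin" using u v Ffin by auto
    have e: "tens u v - T (tens u v) = tens (u - \<pi> u) v + tens (\<pi> u) (v - \<pi>' v)"
      unfolding T_def tmap_tens[OF fp uf vf] by (rule tens_sub_split)
    have "tens (u - \<pi> u) v \<in> Z" unfolding Z_def
      by (rule fvs.span_base, rule UnI1, rule tens_in_tspace) (use u v pi q_def in auto)
    moreover have "tens (\<pi> u) (v - \<pi>' v) \<in> Z" unfolding Z_def
      by (rule fvs.span_base, rule UnI2, rule tens_in_tspace) (use u v pi pi' q_def in auto)
    ultimately show "tens u v - T (tens u v) \<in> Z" unfolding e Z_def by (rule fvs.span_add)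
  qed
  then show ?thesis using T1 T2 unfolding Z_def q_def lspan_eq by simp
qed

section \<open>Swapping tensor factors\<close>

definition swapf :: "('b \<times> 'c \<Rightarrow> 'k) \<Rightarrow> ('c \<times> 'b \<Rightarrow> 'k)" where
  "swapf w = (\<lambda>z. w (prod.swap z))"

lemma swapf_tens: "swapf (tens u v) = tens v u"
  by (rule ext, clarify) (simp add: swapf_def tens_apply mult.commute)

lemma swapf_add: "swapf (u + v) = swapf u + swapf v"
  by (simp add: swapf_def plus_fun_def)
lemma swapf_diff: "swapf (u - v) = swapf u - swapf v"
  by (simp add: swapf_def fun_eq_iff minus_apply)
lemma swapf_sc: "swapf (sc c u) = sc c (swapf u)"
  by (simp add: swapf_def sc_def)
lemma swapf_zero[simp]: "swapf 0 = 0" by (simp add: swapf_def zero_fun_def)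
lemma swapf_sum: "swapf (\<Sum>i\<in>I. w i) = (\<Sum>i\<in>I. swapf (w i))"
  by (induction I rule: infinite_finite_induct) (simp_all add: swapf_add)
lemma swapf_swapf[simp]: "swapf (swapf w) = w"
  by (simp add: swapf_def)

lemma flin_swapf: "flin swapf" by (simp add: flin_def swapf_add swapf_sc)

lemma supp_swapf: "supp (swapf w) = prod.swap ` supp w"
  by (force simp: swapf_def supp_def)

lemma fin_swapf[intro]: "w \<in> fin \<Longrightarrow> swapf w \<in> fin"
  by (simp add: fin_iff supp_swapf)

lemma swapf_tspace:
  assumes "U \<subseteq> fin" "V \<subseteq> fin" "w \<in> tspace U V"
  shows "swapf w \<in> tspace V U"
  by (rule tspace_map[OF flin_swapf assms(1,2) tspace_subspace _ assms(3)])
     (simp add: swapf_tens tens_in_tspace)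

lemma swapf_span_union:
  assumes "A \<subseteq> fin" "B \<subseteq> fin" "w \<in> fvs.span (A \<union> B)"
    and "\<And>a. a \<in> A \<Longrightarrow> swapf a \<in> fvs.span (A' \<union> B')"
    and "\<And>b. b \<in> B \<Longrightarrow> swapf b \<in> fvs.span (A' \<union> B')"
  shows "swapf w \<in> fvs.span (A' \<union> B')"
  by (rule flin_span[OF flin_swapf _ fvs.subspace_span _ assms(3)]) (use assms in auto)

lemma swapf_tFil:
  assumes F: "filt F" and F': "filt F'" and w: "w \<in> tFil F F' n"
  shows "swapf w \<in> tFil F' F n"
proof -
  have "swapf w \<in> fvs.span (\<Union>p\<in>{0..n}. tspace (F' p) (F (n - p)))"
  proof (rule flin_span[OF flin_swapf _ fvs.subspace_span])
    show "w \<in> fvs.span (\<Union>p\<in>{0..n}. tspace (F p) (F' (n - p)))" using w unfolding tFil_def lspan_eq .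
    show "(\<Union>p\<in>{0..n}. tspace (F p) (F' (n - p))) \<subseteq> fin"
      using tspace_fin[OF filt_fin[OF F] filt_fin[OF F']] by blast
    fix x assume "x \<in> (\<Union>p\<in>{0..n}. tspace (F p) (F' (n - p)))"
    then obtain p where p: "p \<le> n" "x \<in> tspace (F p) (F' (n - p))" by auto
    have "swapf x \<in> tspace (F' (n - p)) (F (n - (n - p)))"
      using swapf_tspace[OF filt_fin[OF F] filt_fin[OF F'] p(2)] p(1) by simp
    then show "swapf x \<in> fvs.span (\<Union>p\<in>{0..n}. tspace (F' p) (F (n - p)))"
      using p(1) by (intro fvs.span_base UN_I[of "n - p"]) auto
  qed
  then show ?thesis unfolding tFil_def lspan_eq .
qed

lemma slice2_swapf: "slice2 (swapf y) p q = swapf (slice2 y q p)"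
  by (simp add: slice2_def swapf_def fun_eq_iff split: prod.split)

lemma slice2_diff: "slice2 (y - y') p q = slice2 y p q - slice2 y' p q"
  by (simp add: slice2_def fun_eq_iff minus_apply split: prod.split)

lemma slice2_sum_fun: "(\<Sum>p\<in>I. slice2 y p (g p)) = (\<lambda>z. \<Sum>p\<in>I. slice2 y p (g p) z)"
  by (rule ext) (simp add: sum_fun_apply)

lemma induced_rel_sum:
  assumes "induced_rel F F1 F2 f x y"
  shows "(\<Sum>p\<in>{0..n}. slice2 y p (n - p)) - f (slice x n) \<in> tFil F1 F2 (Suc n)"
proof -
  have "(\<Sum>p\<in>{0..n}. slice2 y p (n - p)) - f (slice x n)
      = (\<lambda>z. (\<Sum>p\<in>{0..n}. slice2 y p (n - p) z) - f (slice x n) z)"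
    by (rule ext) (simp add: minus_apply sum_fun_apply)
  then show ?thesis using assms unfolding induced_rel_def by simp
qed

lemma tFil_subspace: "fvs.subspace (tFil F F' n)"
  unfolding tFil_def lspan_eq by simp

lemma tRep_fin: "y \<in> tRep F F' \<Longrightarrow> y \<in> fin"
  by (simp add: tRep_def fin_iff)

lemma tRep_slice: "y \<in> tRep F F' \<Longrightarrow> slice2 y p q \<in> tspace (F p) (F' q)"
  by (simp add: tRep_def)

lemma tZer_from_sums:
  assumes F: "filt F" and F': "filt F'" and yf: "y \<in> fin"
    and ys: "\<And>p q. slice2 y p q \<in> tspace (F p) (F' q)"
    and S: "\<And>n. (\<Sum>p\<in>{0..n}. slice2 y p (n - p)) \<in> tFil F F' (Suc n)"
  shows "y \<in> tZer F F'"
proof -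
  have "slice2 y p q \<in> lspan (tspace (F (Suc p)) (F' q) \<union> tspace (F p) (F' (Suc q)))" for p q
    using KL[OF F F', of "p + q" "\<lambda>p'. slice2 y p' (p + q - p')" p] ys S[of "p + q"] by simp
  then show ?thesis using yf unfolding tZer_def fin_iff by blast
qed

lemma cocomm_gen:
  assumes F: "filt F" and F': "filt F'"
    and r1: "induced_rel Fx F F' f1 x y1" and r2: "induced_rel Fx F' F f2 x y2"
    and c: "\<And>n. swapf (f2 (slice x n)) - f1 (slice x n) \<in> tFil F F' (Suc n)"
  shows "swapf y2 - y1 \<in> tZer F F'"
proof (rule tZer_from_sums[OF F F'])
  have y1: "y1 \<in> tRep F F'" and y2: "y2 \<in> tRep F' F" using r1 r2 by (auto simp: induced_rel_def)
  show "swapf y2 - y1 \<in> fin" using tRep_fin[OF y1] tRep_fin[OF y2] by auto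
  fix p q
  show "slice2 (swapf y2 - y1) p q \<in> tspace (F p) (F' q)"
    unfolding slice2_diff slice2_swapf
    by (rule fvs.subspace_diff[OF tspace_subspace]) 
       (auto intro!: swapf_tspace filt_fin F F' tRep_slice[OF y2] tRep_slice[OF y1])
next
  fix n
  have y2: "y2 \<in> tRep F' F" using r2 by (auto simp: induced_rel_def)
  let ?S1 = "\<Sum>p\<in>{0..n}. slice2 y1 p (n - p)"
  let ?S2 = "\<Sum>p\<in>{0..n}. slice2 y2 p (n - p)"
  have e: "(\<Sum>p\<in>{0..n}. slice2 (swapf y2 - y1) p (n - p)) = swapf ?S2 - ?S1"
  proof -
    have "(\<Sum>p\<in>{0..n}. slice2 (swapf y2 - y1) p (n - p))
        = (\<Sum>p\<in>{0..n}. swapf (slice2 y2 (n - p) p)) - ?S1"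
      unfolding slice2_diff slice2_swapf by (simp add: sum_subtractf)
    also have "(\<Sum>p\<in>{0..n}. swapf (slice2 y2 (n - p) p)) = (\<Sum>p\<in>{0..n}. swapf (slice2 y2 p (n - p)))"
      by (subst sum.atLeastAtMost_rev) (intro sum.cong, auto)
    finally show ?thesis by (simp add: swapf_sum)
  qed
  have a: "swapf (?S2 - f2 (slice x n)) \<in> tFil F F' (Suc n)"
    by (rule swapf_tFil[OF F' F induced_rel_sum[OF r2]])
  have b: "?S1 - f1 (slice x n) \<in> tFil F F' (Suc n)" by (rule induced_rel_sum[OF r1])
  have "swapf ?S2 - ?S1 = (swapf (?S2 - f2 (slice x n)) + (swapf (f2 (slice x n)) - f1 (slice x n)))
        - (?S1 - f1 (slice x n))"
    by (simp add: swapf_diff algebra_simps)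
  also have "\<dots> \<in> tFil F F' (Suc n)"
    by (intro fvs.subspace_diff[OF tFil_subspace] fvs.subspace_add[OF tFil_subspace] a b c)
  finally show "(\<Sum>p\<in>{0..n}. slice2 (swapf y2 - y1) p (n - p)) \<in> tFil F F' (Suc n)" unfolding e .
qed

section \<open>Group algebra\<close>

lemma supp_lin: "supp (lin \<phi> u) \<subseteq> (\<Union>x\<in>supp u. supp (\<phi> x))"
proof
  fix z assume z: "z \<in> supp (lin \<phi> u)"
  show "z \<in> (\<Union>x\<in>supp u. supp (\<phi> x))"
  proof (rule ccontr)
    assume "z \<notin> (\<Union>x\<in>supp u. supp (\<phi> x))"
    then have "\<forall>x\<in>supp u. \<phi> x z = 0" by auto
    then have "lin \<phi> u z = 0" unfolding lin_def by simp
    then show False using z by simp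
  qed
qed

lemma free_fin: "free X \<subseteq> fin" by (auto simp: free_def fin_iff)

lemma free_subspace: "fvs.subspace (free X)"
  unfolding fvs.subspace_def free_def
  by (auto intro: finite_subset[OF supp_add] finite_subset[OF supp_sc]
      dest: subsetD[OF supp_add] subsetD[OF supp_sc])

lemma delta_free: "x \<in> X \<Longrightarrow> (delta x :: _ \<Rightarrow> 'k::field) \<in> free X" by (simp add: free_def)

lemma lin_free: "u \<in> fin \<Longrightarrow> (\<And>x. x \<in> supp u \<Longrightarrow> \<phi> x \<in> free X) \<Longrightarrow> lin \<phi> u \<in> free X"
proof -
  assume u: "u \<in> fin" and ph: "\<And>x. x \<in> supp u \<Longrightarrow> \<phi> x \<in> free X"
  have "lin \<phi> u \<in> fin" using u ph free_fin by (intro lin_fin) auto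
  moreover have "supp (lin \<phi> u) \<subseteq> X" using supp_lin[of \<phi> u] ph by (fastforce simp: free_def)
  ultimately show ?thesis by (simp add: free_def fin_iff)
qed

lemma gmul_as_lin: "gmul G u v = lin (\<lambda>x. lin (\<lambda>y. delta (x \<otimes>\<^bsub>G\<^esub> y)) v) u"
  unfolding gmul_def lin_def sum_distrib_left
  by (rule ext, intro sum.cong refl) (auto simp: delta_def)

lemma gmul_as_lin2: "gmul G u v = lin (\<lambda>y. lin (\<lambda>x. delta (x \<otimes>\<^bsub>G\<^esub> y)) u) v"
  unfolding gmul_def lin_def sum_distrib_left
  by (rule ext, subst sum.swap, intro sum.cong refl) (auto simp: delta_def mult.commute)

lemma flin_gmul1: "flin (\<lambda>u. gmul G u v)" unfolding gmul_as_lin by (rule flin_lin)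
lemma flin_gmul2: "flin (\<lambda>v. gmul G u v)" unfolding gmul_as_lin2 by (rule flin_lin)

lemma gmul_delta: "gmul G (delta x) (delta y) = delta (x \<otimes>\<^bsub>G\<^esub> y)"
  unfolding gmul_as_lin by simp

definition eps :: "('b \<Rightarrow> 'k::field) \<Rightarrow> 'k" where
  "eps u = lin (\<lambda>x (_::unit). 1) u ()"

lemma eps_sum: "eps u = (\<Sum>x\<in>supp u. u x)" by (simp add: eps_def lin_def)

lemma eps_lin: "u \<in> fin \<Longrightarrow> (\<And>x. \<phi> x \<in> fin) \<Longrightarrow> eps (lin \<phi> u) = (\<Sum>x\<in>supp u. u x * eps (\<phi> x))"
  unfolding eps_def by (subst lin_lin) (auto simp: lin_def)

lemma eps_delta[simp]: "eps (delta x) = 1" by (simp add: eps_def)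

lemma eps_add: "u \<in> fin \<Longrightarrow> v \<in> fin \<Longrightarrow> eps (u + v) = eps u + eps v"
  unfolding eps_def by (simp add: lin_add plus_fun_apply)
lemma eps_sc: "eps (sc c u) = c * eps u"
  unfolding eps_def by (simp add: lin_sc sc_apply)

lemma augI_eps: "augI G = {u \<in> free (carrier G). eps u = 0}"
  by (simp add: augI_def eps_sum)

lemma augI_subspace: "fvs.subspace (augI G)"
proof -
  have z: "eps (0::'b \<Rightarrow> 'k::field) = 0" by (simp add: eps_sum)
  have "fvs.subspace {u \<in> free (carrier G). eps u = (0::'k::field)}"
    unfolding fvs.subspace_def
  proof (intro conjI ballI allI)
    show "0 \<in> {u \<in> free (carrier G). eps u = (0::'k)}" using z fvs.subspace_0[OF free_subspace] by auto
  next
    fix x y assume xy: "x \<in> {u \<in> free (carrier G). eps u = (0::'k)}" "y \<in> {u \<in> free (carrier G). eps u = (0::'k)}"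
    then have "x \<in> fin" "y \<in> fin" using free_fin by auto
    then show "x + y \<in> {u \<in> free (carrier G). eps u = (0::'k)}"
      using xy fvs.subspace_add[OF free_subspace] by (auto simp: eps_add)
  next
    fix c x assume "x \<in> {u \<in> free (carrier G). eps u = (0::'k)}"
    then show "sc c x \<in> {u \<in> free (carrier G). eps u = (0::'k)}"
      using fvs.subspace_scale[OF free_subspace] by (auto simp: eps_sc)
  qed
  then show ?thesis by (simp add: augI_eps)
qed

lemma augI_free: "augI G \<subseteq> free (carrier G)" by (auto simp: augI_def)

lemma functional_exists:
  fixes B :: "('b \<Rightarrow> 'k::field) set"
  assumes B: "fvs.subspace B" and x0: "x0 \<notin> B"
  obtains f :: "('b \<Rightarrow> 'k) \<Rightarrow> 'k" where "Vector_Spaces.linear sc (*) f" "\<And>u. u \<in> B \<Longrightarrow> f u = 0" "f x0 = 1"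
proof -
  obtain B1 where B1: "B1 \<subseteq> B" "fvs.independent B1" "B \<subseteq> fvs.span B1"
    by (rule fvs.maximal_independent_subset)
  have sB1: "fvs.span B1 = B" using B1 B fvs.span_minimal by blast
  have x0B1: "x0 \<notin> fvs.span B1" using x0 sB1 by simp
  have ind: "fvs.independent (insert x0 B1)" by (rule fvs.independent_insertI[OF x0B1 B1(2)])
  define f :: "('b \<Rightarrow> 'k) \<Rightarrow> 'k" where "f = fkp.construct (insert x0 B1) (\<lambda>b. if b = x0 then 1 else 0)"
  have lin: "Vector_Spaces.linear sc (*) f" unfolding f_def by (rule fkp.linear_construct[OF ind])
  have fb: "f b = (if b = x0 then 1 else 0)" if "b \<in> insert x0 B1" for b
    unfolding f_def by (rule fkp.construct_basis[OF ind that])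
  have z: "f u = 0" if "u \<in> B" for u
  proof -
    have "u \<in> fvs.span B1" using that sB1 by simp
    then show ?thesis
    proof (induction rule: fvs.span_induct_alt)
      case base then show ?case using lin unfolding linear_iff by (metis fvs.scale_zero_left mult_zero_left)
    next
      case (step c x y)
      have "x \<noteq> x0" using step x0B1 fvs.span_base by blast
      then have "f x = 0" using fb[of x] step by auto
      then show ?case using step lin unfolding linear_iff by simp
    qed
  qed
  have "f x0 = 1" using fb[of x0] by simp
  then show ?thesis using that lin z by blast
qed

definition Rf :: "(('c \<Rightarrow> 'k::field) \<Rightarrow> 'k) \<Rightarrow> ('b \<times> 'c \<Rightarrow> 'k) \<Rightarrow> 'b \<Rightarrow> 'k" where
  "Rf f w = (\<lambda>g. f (\<lambda>h. w (g, h)))"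

lemma Rf_tens:
  assumes f: "Vector_Spaces.linear sc (*) f"
  shows "Rf f (tens u v) = sc (f v) u"
proof
  fix g
  have "(\<lambda>h. tens u v (g, h)) = sc (u g) v" by (simp add: fun_eq_iff tens_apply sc_apply)
  then show "Rf f (tens u v) g = sc (f v) u g"
    using f unfolding Rf_def linear_iff by (simp add: sc_apply mult.commute)
qed

lemma flin_Rf:
  fixes f :: "('c \<Rightarrow> 'k::field) \<Rightarrow> 'k"
  assumes f: "Vector_Spaces.linear sc (*) f"
  shows "flin (Rf f :: ('b \<times> 'c \<Rightarrow> 'k) \<Rightarrow> 'b \<Rightarrow> 'k)"
  unfolding flin_def
proof (intro conjI ballI allI)
  fix u v :: "'b \<times> 'c \<Rightarrow> 'k" assume "u \<in> fin" "v \<in> fin"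
  show "Rf f (u + v) = Rf f u + Rf f v"
  proof
    fix g
    have a: "(\<lambda>h. (u + v) (g, h)) = (\<lambda>h. u (g, h)) + (\<lambda>h. v (g, h))"
      by (simp add: fun_eq_iff plus_fun_apply)
    have c: "f ((\<lambda>h. u (g, h)) + (\<lambda>h. v (g, h))) = f (\<lambda>h. u (g, h)) + f (\<lambda>h. v (g, h))"
      using f unfolding linear_iff by blast
    show "Rf f (u + v) g = (Rf f u + Rf f v) g"
      unfolding Rf_def a c by (simp only: plus_fun_apply)
  qed
next
  fix u :: "'b \<times> 'c \<Rightarrow> 'k" and c assume "u \<in> fin"
  show "Rf f (sc c u) = sc c (Rf f u)"
  proof
    fix g
    have b: "(\<lambda>h. sc c u (g, h)) = sc c (\<lambda>h. u (g, h))"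
      by (simp add: fun_eq_iff sc_apply)
    have d: "f (sc c (\<lambda>h. u (g, h))) = c * f (\<lambda>h. u (g, h))"
      using f unfolding linear_iff by blast
    show "Rf f (sc c u) g = sc c (Rf f u) g"
      unfolding Rf_def b d by (simp only: sc_apply)
  qed
qed

lemma Rf_zer:
  assumes f: "Vector_Spaces.linear sc (*) f" and F: "filt F"
    and fz: "\<And>u. u \<in> F (Suc m) \<Longrightarrow> f u = 0"
    and w: "w \<in> fvs.span (tspace (F (Suc p)) (F m) \<union> tspace (F p) (F (Suc m)))"
  shows "Rf f w \<in> F (Suc p)"
proof (rule flin_span[OF flin_Rf[OF f] _ filt_sub[OF F] _ w])
  show "tspace (F (Suc p)) (F m) \<union> tspace (F p) (F (Suc m)) \<subseteq> fin"
    using tspace_fin[OF filt_fin[OF F] filt_fin[OF F]] by blast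
  fix x assume "x \<in> tspace (F (Suc p)) (F m) \<union> tspace (F p) (F (Suc m))"
  then show "Rf f x \<in> F (Suc p)"
  proof
    assume "x \<in> tspace (F (Suc p)) (F m)"
    then show ?thesis
      by (rule tspace_map[OF flin_Rf[OF f] filt_fin[OF F] filt_fin[OF F] filt_sub[OF F], rotated])
         (simp add: Rf_tens[OF f] fvs.subspace_scale[OF filt_sub[OF F]])
  next
    assume "x \<in> tspace (F p) (F (Suc m))"
    then show ?thesis
      by (rule tspace_map[OF flin_Rf[OF f] filt_fin[OF F] filt_fin[OF F] filt_sub[OF F], rotated])
         (simp add: Rf_tens[OF f] fz fvs.subspace_0[OF filt_sub[OF F]])
  qed
qed

definition Leps :: "('b \<times> 'c \<Rightarrow> 'k::field) \<Rightarrow> 'c \<Rightarrow> 'k" where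
  "Leps = lin (\<lambda>xy. delta (snd xy))"

lemma flin_Leps: "flin Leps" unfolding Leps_def by (rule flin_lin)

lemma Leps_tens: "u \<in> fin \<Longrightarrow> v \<in> fin \<Longrightarrow> Leps (tens u v) = sc (eps u) v"
proof -
  assume u: "u \<in> fin" and v: "v \<in> fin"
  have "Leps (tens u v) = lin (\<lambda>x. Leps (lin (\<lambda>y. delta (x, y)) v)) u"
    unfolding tens_as_lin[OF u v] Leps_def by (rule lin_lin[OF u]) (use v in \<open>auto intro!: lin_fin\<close>)
  also have "\<dots> = lin (\<lambda>x. v) u"
    unfolding Leps_def by (intro lin_fun_cong, subst lin_lin[OF v]) (auto simp: lin_expand[OF v])
  also have "\<dots> = sc (eps u) v"
    by (simp add: lin_def eps_sum fun_eq_iff sc_apply sum_distrib_right)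
  finally show ?thesis .
qed

lemma comulG_as_lin: "u \<in> fin \<Longrightarrow> comulG u = lin (\<lambda>x. delta (x, x)) u"
proof (rule ext, clarify)
  fix a b assume u: "u \<in> fin"
  have "lin (\<lambda>x. delta (x, x)) u (a, b) = (\<Sum>x\<in>supp u. if x = a then (if a = b then u x else 0) else 0)"
    unfolding lin_def by (intro sum.cong refl) (auto simp: delta_def)
  also have "\<dots> = (if a \<in> supp u then (if a = b then u a else 0) else 0)"
    using u by (simp add: fin_iff sum.delta)
  also have "\<dots> = comulG u (a, b)" by (auto simp: comulG_def)
  finally show "comulG u (a, b) = lin (\<lambda>x. delta (x, x)) u (a, b)" by simp
qed

lemma Leps_comulG: "u \<in> fin \<Longrightarrow> Leps (comulG u) = u"
  unfolding comulG_as_lin Leps_def by (subst lin_lin) (auto simp: lin_expand)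

definition Pm :: "'c \<Rightarrow> ('a \<times> ('c \<times> 'b) \<Rightarrow> 'k) \<Rightarrow> ('a \<times> 'b \<Rightarrow> 'k)" where
  "Pm m Y = (\<lambda>(a, h). Y (a, (m, h)))"

lemma Pm_tens: "Pm m (tens u v) = tens u (\<lambda>h. v (m, h))"
  by (rule ext, clarify) (simp add: Pm_def tens_apply)

lemma supp_Pm: "supp (Pm m Y) \<subseteq> (\<lambda>(a, b). (a, snd b)) ` supp Y"
  by (auto simp: Pm_def supp_def image_iff split: prod.splits)

lemma fin_Pm: "Y \<in> fin \<Longrightarrow> Pm m Y \<in> fin"
  unfolding fin_iff by (rule finite_subset[OF supp_Pm]) simp

lemma flin_Pm: "flin (Pm m :: ('a \<times> ('c \<times> 'b) \<Rightarrow> 'k::field) \<Rightarrow> _)"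
  unfolding flin_def by (auto simp: Pm_def fun_eq_iff plus_fun_apply sc_apply)

lemma flin_comp: "flin L1 \<Longrightarrow> flin L2 \<Longrightarrow> (\<And>u. u \<in> fin \<Longrightarrow> L2 u \<in> fin) \<Longrightarrow> flin (\<lambda>u. L1 (L2 u))"
  unfolding flin_def by auto

lemma supp_Rf:
  assumes f: "Vector_Spaces.linear sc (*) f"
  shows "supp (Rf f w) \<subseteq> fst ` supp w"
proof
  fix g assume g: "g \<in> supp (Rf f w)"
  show "g \<in> fst ` supp w"
  proof (rule ccontr)
    assume "g \<notin> fst ` supp w"
    then have "(\<lambda>h. w (g, h)) = 0" by (force simp: fun_eq_iff zero_fun_def image_iff)
    then have "Rf f w g = 0" using f unfolding Rf_def linear_iff by (metis fvs.scale_zero_left mult_zero_left)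
    then show False using g by simp
  qed
qed

lemma fin_Rf: "Vector_Spaces.linear sc (*) f \<Longrightarrow> w \<in> fin \<Longrightarrow> Rf f w \<in> fin"
  unfolding fin_iff by (rule finite_subset[OF supp_Rf]) auto

lemma slice_diff: "slice (x - y) n = slice x n - slice y n"
  by (simp add: slice_def fun_eq_iff minus_apply)

lemma slice_fin: "x \<in> fin \<Longrightarrow> slice x n \<in> fin"
proof -
  assume x: "x \<in> fin"
  have "supp (slice x n) \<subseteq> snd ` supp x" by (force simp: slice_def supp_def image_iff)
  then show ?thesis using x unfolding fin_iff by (meson finite_imageI finite_subset)
qed

lemma slice2_fin: "y \<in> fin \<Longrightarrow> slice2 y p q \<in> fin"
proof -
  assume y: "y \<in> fin"
  have "supp (slice2 y p q) \<subseteq> (\<lambda>((a, b), (c, d)). (b, d)) ` supp y"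
    by (auto simp: slice2_def supp_def image_iff split: prod.splits) force
  then show ?thesis using y unfolding fin_iff by (meson finite_imageI finite_subset)
qed

lemma comulG_zero[simp]: "comulG 0 = 0"
  by (simp add: comulG_def fun_eq_iff zero_fun_def)

lemma eps_diff: "u \<in> fin \<Longrightarrow> v \<in> fin \<Longrightarrow> eps (u - v) = eps u - eps v"
proof -
  assume u: "u \<in> fin" and v: "v \<in> fin"
  have "eps u = eps ((u - v) + v)" by simp
  also have "\<dots> = eps (u - v) + eps v" using u v by (intro eps_add) auto
  finally show ?thesis by simp
qed

locale galg = group G for G :: "('g, 'm) monoid_scheme" (structure)
begin

lemma free_supp: "u \<in> free (carrier G) \<Longrightarrow> x \<in> supp u \<Longrightarrow> x \<in> carrier G"
  by (auto simp: free_def)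

lemma free_fin': "u \<in> free X \<Longrightarrow> u \<in> fin" using free_fin by auto

lemma free_supp': "u \<in> free (carrier G) \<Longrightarrow> u x \<noteq> 0 \<Longrightarrow> x \<in> carrier G"
  by (auto simp: free_def)

lemma gmul_free:
  assumes u: "u \<in> free (carrier G)" and v: "v \<in> free (carrier G)"
  shows "gmul G u v \<in> free (carrier G)"
  unfolding gmul_as_lin
  by (intro lin_free free_fin'[OF u] free_fin'[OF v] delta_free m_closed)
     (auto dest: free_supp'[OF u] free_supp'[OF v])

lemma gmul_assoc:
  fixes u v w :: "'g \<Rightarrow> 'k::field"
  assumes u: "u \<in> free (carrier G)" and v: "v \<in> free (carrier G)" and w: "w \<in> free (carrier G)"
  shows "gmul G (gmul G u v) w = gmul G u (gmul G v w)"
proof -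
  have uf: "u \<in> fin" and vf: "v \<in> fin" and wf: "w \<in> fin" using u v w by (auto intro: free_fin')
  have fin1: "\<And>x. lin (\<lambda>y. delta (x \<otimes> y)) v \<in> fin" using vf by (intro lin_fin) auto
  have fin2: "\<And>y. lin (\<lambda>t. delta (y \<otimes> t)) w \<in> fin" using wf by (intro lin_fin) auto
  have "gmul G (gmul G u v) w = lin (\<lambda>z. lin (\<lambda>t. delta (z \<otimes> t)) w) (lin (\<lambda>x. lin (\<lambda>y. delta (x \<otimes> y)) v) u)"
    unfolding gmul_as_lin ..
  also have "\<dots> = lin (\<lambda>x. lin (\<lambda>z. lin (\<lambda>t. delta (z \<otimes> t)) w) (lin (\<lambda>y. delta (x \<otimes> y)) v)) u"
    by (rule lin_lin[OF uf fin1])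
  also have "\<dots> = lin (\<lambda>x. lin (\<lambda>y. lin (\<lambda>t. delta ((x \<otimes> y) \<otimes> t)) w) v) u"
    by (rule lin_fun_cong, subst lin_lin[OF vf]) simp_all
  also have "\<dots> = lin (\<lambda>x. lin (\<lambda>y. lin (\<lambda>t. delta (x \<otimes> (y \<otimes> t))) w) v) u"
    by (intro lin_fun_cong) (simp add: m_assoc free_supp'[OF u] free_supp'[OF v] free_supp'[OF w])
  also have "\<dots> = lin (\<lambda>x. lin (\<lambda>s. delta (x \<otimes> s)) (lin (\<lambda>y. lin (\<lambda>t. delta (y \<otimes> t)) w) v)) u"
    by (rule lin_fun_cong, subst lin_lin[OF vf fin2], rule lin_fun_cong, subst lin_lin[OF wf]) simp_all
  also have "\<dots> = gmul G u (gmul G v w)"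
    unfolding gmul_as_lin ..
  finally show ?thesis .
qed

lemma eps_gmul:
  assumes u: "u \<in> fin" and v: "v \<in> fin"
  shows "eps (gmul G u v) = eps u * (eps v :: 'k::field)"
proof -
  have "eps (gmul G u v) = (\<Sum>x\<in>supp u. u x * eps (lin (\<lambda>y. delta (x \<otimes> y)) v))"
    unfolding gmul_as_lin by (rule eps_lin[OF u]) (use v in \<open>auto intro: lin_fin\<close>)
  also have "\<dots> = (\<Sum>x\<in>supp u. u x * eps v)"
  proof (intro sum.cong refl)
    fix x show "u x * eps (lin (\<lambda>y. delta (x \<otimes> y)) v) = u x * eps v"
    proof -
      have "eps (lin (\<lambda>y. delta (x \<otimes> y)) v) = (\<Sum>y\<in>supp v. v y * eps (delta (x \<otimes> y) :: 'g \<Rightarrow> 'k))"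
        by (rule eps_lin[OF v]) simp
      also have "\<dots> = eps v" by (simp only: eps_delta mult_1_right) (simp only: eps_sum)
      finally show ?thesis by simp
    qed
  qed
  also have "\<dots> = eps u * eps v" by (simp add: eps_sum sum_distrib_right)
  finally show ?thesis .
qed

lemma augI_mult: "u \<in> augI G \<Longrightarrow> v \<in> free (carrier G) \<Longrightarrow> gmul G u v \<in> augI G"
  by (auto simp: augI_eps gmul_free eps_gmul free_fin')

lemma IG_free: "IGpow G n \<subseteq> free (carrier G)"
proof (induction n)
  case (Suc n)
  show ?case unfolding IGpow.simps lspan_eq
    by (rule fvs.span_minimal[OF _ free_subspace]) (use Suc augI_free in \<open>auto intro!: gmul_free\<close>)
qed simp

lemma IG_free': "u \<in> IGpow G n \<Longrightarrow> u \<in> free (carrier G)" using IG_free by blast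

lemma augI_free': "v \<in> augI G \<Longrightarrow> v \<in> free (carrier G)" using augI_free by blast

lemma gen_fin: "u \<in> IGpow G a \<Longrightarrow> v \<in> augI G \<Longrightarrow> gmul G u v \<in> fin"
  by (rule free_fin'[OF gmul_free[OF IG_free' augI_free']])

lemma IG_subspace: "fvs.subspace (IGpow G n)"
  by (cases n) (auto simp: lspan_eq free_subspace)

lemma IG_fin: "IGpow G n \<subseteq> fin" using IG_free free_fin by blast

lemma IG_right:
  fixes u f :: "'g \<Rightarrow> 'k::field"
  shows "u \<in> IGpow G a \<Longrightarrow> f \<in> free (carrier G) \<Longrightarrow> gmul G u f \<in> IGpow G a"
proof (induction a arbitrary: u)
  case 0 then show ?case by (simp add: gmul_free)
next
  case (Suc a)
  let ?S = "{gmul G u v |u v. u \<in> IGpow G a \<and> v \<in> augI G} :: ('g \<Rightarrow> 'k) set"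
  have "?S \<subseteq> fin" using gen_fin by blast
  show ?case
  proof (rule flin_span[OF flin_gmul1 \<open>?S \<subseteq> fin\<close> IG_subspace])
    show "u \<in> fvs.span ?S" using Suc.prems(1) unfolding IGpow.simps lspan_eq .
    fix x assume "x \<in> ?S"
    then obtain u' v' where x: "x = gmul G u' v'" "u' \<in> IGpow G a" "v' \<in> augI G" by auto
    have "gmul G x f = gmul G u' (gmul G v' f)"
      unfolding x(1) by (rule gmul_assoc) (use x IG_free augI_free Suc.prems(2) in auto)
    moreover have "gmul G v' f \<in> augI G" using augI_mult x(3) Suc.prems(2) by auto
    ultimately show "gmul G x f \<in> IGpow G (Suc a)"
      unfolding IGpow.simps lspan_eq using x(2) by (intro fvs.span_base) auto
  qed
qed

lemma IG_mono: "IGpow G (Suc a) \<subseteq> IGpow G a"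
  unfolding IGpow.simps lspan_eq
  by (rule fvs.span_minimal[OF _ IG_subspace]) (use augI_free in \<open>auto intro!: IG_right\<close>)

lemma IG_filt: "filt (IGpow G)"
  unfolding filt_def using IG_subspace IG_mono IG_fin by blast

lemma IG_anti: "a \<le> b \<Longrightarrow> IGpow G b \<subseteq> IGpow G a"
  by (rule filt_anti[OF IG_filt])

lemma IG_mult:
  fixes u w :: "'g \<Rightarrow> 'k::field"
  shows "u \<in> IGpow G a \<Longrightarrow> w \<in> IGpow G b \<Longrightarrow> gmul G u w \<in> IGpow G (a + b)"
proof (induction b arbitrary: w)
  case 0 then show ?case using IG_right by simp
next
  case (Suc b)
  let ?S = "{gmul G u v |u v. u \<in> IGpow G b \<and> v \<in> augI G} :: ('g \<Rightarrow> 'k) set"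
  have "?S \<subseteq> fin" using gen_fin by blast
  show ?case
  proof (rule flin_span[OF flin_gmul2 \<open>?S \<subseteq> fin\<close> IG_subspace])
    show "w \<in> fvs.span ?S" using Suc.prems(2) unfolding IGpow.simps lspan_eq .
    fix x assume "x \<in> ?S"
    then obtain u' v' where x: "x = gmul G u' v'" "u' \<in> IGpow G b" "v' \<in> augI G" by auto
    have "gmul G u x = gmul G (gmul G u u') v'"
      unfolding x(1) by (rule gmul_assoc[symmetric]) (use x IG_free augI_free Suc.prems(1) in auto)
    moreover have "gmul G u u' \<in> IGpow G (a + b)" using Suc.IH[OF Suc.prems(1) x(2)] .
    ultimately show "gmul G u x \<in> IGpow G (a + Suc b)"
      unfolding add_Suc_right IGpow.simps lspan_eq using x(3) by (intro fvs.span_base) auto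
  qed
qed

lemma IG1: "IGpow G (Suc 0) = augI G"
proof
  show "IGpow G (Suc 0) \<subseteq> augI G"
    unfolding IGpow.simps lspan_eq
    by (rule fvs.span_minimal[OF _ augI_subspace]) (auto simp: augI_eps gmul_free eps_gmul free_fin')
  show "augI G \<subseteq> IGpow G (Suc 0)"
  proof
    fix v :: "'g \<Rightarrow> 'k::field" assume v: "v \<in> augI G"
    have "gmul G (delta \<one>) v = v"
    proof -
      have vf: "v \<in> fin" using v augI_free free_fin' by blast
      have "gmul G (delta \<one>) v = lin (\<lambda>y. delta (\<one> \<otimes> y)) v" unfolding gmul_as_lin by simp
      also have "\<dots> = lin delta v"
      proof (rule lin_fun_cong)
        fix x assume "x \<in> supp v"
        then have "x \<in> carrier G" using free_supp[OF augI_free'[OF v]] by blast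
        then show "delta (\<one> \<otimes> x) = delta x" by simp
      qed
      finally show ?thesis using lin_expand[OF vf] by simp
    qed
    then have e: "v = gmul G (delta \<one>) v" by simp
    show "v \<in> IGpow G (Suc 0)"
      unfolding IGpow.simps lspan_eq
    proof (intro fvs.span_base CollectI exI conjI)
      show "v = gmul G (delta \<one>) v" by (rule e)
      show "(delta \<one> :: 'g \<Rightarrow> 'k) \<in> free (carrier G)" by (rule delta_free[OF one_closed])
      show "v \<in> augI G" by (rule v)
    qed
  qed
qed

lemma swapf_comulG: "swapf (comulG u) = comulG u"
  by (rule ext, clarify) (simp add: swapf_def comulG_def)

lemma DG_cocomm: "DG_cocommutative TYPE('k::field) G"
  unfolding DG_cocommutative_def
proof (intro ballI allI impI)
  fix x :: "nat \<times> 'g \<Rightarrow> 'k" and y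
  assume r: "induced_rel (IGpow G) (IGpow G) (IGpow G) comulG x y"
  have "swapf y - y \<in> tZer (IGpow G) (IGpow G)"
  proof (rule cocomm_gen[OF IG_filt IG_filt r r])
    fix n show "swapf (comulG (slice x n)) - comulG (slice x n) \<in> tFil (IGpow G) (IGpow G) (Suc n)"
      by (simp add: swapf_comulG fvs.subspace_0[OF tFil_subspace])
  qed
  then show "(\<lambda>z. y (prod.swap z)) - y \<in> tZer (IGpow G) (IGpow G)" by (simp add: swapf_def)
qed

declare IGpow.simps(2)[simp del]

definition eG :: "nat \<times> 'g \<Rightarrow> 'k::field" where
  "eG = (\<lambda>(n, g). if n = 0 \<and> g = \<one> then 1 else 0)"

lemma slice_eG: "slice eG n = (if n = 0 then delta \<one> else 0)"
  by (auto simp: slice_def eG_def delta_def fun_eq_iff zero_fun_def)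

lemma eG_fin: "eG \<in> fin"
proof -
  have "supp eG \<subseteq> {(0, \<one>)}" by (auto simp: supp_def eG_def split: if_splits)
  then show ?thesis unfolding fin_iff by (rule finite_subset) simp
qed

lemma eG_not_zer: "(eG :: nat \<times> 'g \<Rightarrow> 'k::field) \<notin> grZer (IGpow G)"
proof
  assume "(eG :: nat \<times> 'g \<Rightarrow> 'k) \<in> grZer (IGpow G)"
  then have "slice (eG :: nat \<times> 'g \<Rightarrow> 'k) 0 \<in> IGpow G (Suc 0)" by (simp add: grZer_def)
  then have "(delta \<one> :: 'g \<Rightarrow> 'k) \<in> augI G" by (simp add: slice_eG IG1)
  then show False by (simp add: augI_eps)
qed

lemma grRep_fin: "x \<in> grRep F \<Longrightarrow> x \<in> fin" by (simp add: grRep_def fin_iff)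
lemma grZer_fin: "x \<in> grZer F \<Longrightarrow> x \<in> fin" by (simp add: grZer_def fin_iff)

lemma Leps_zero_pos:
  fixes w :: "'g \<times> 'g \<Rightarrow> 'k::field"
  assumes "w \<in> tspace (IGpow G (Suc p)) (IGpow G q)"
  shows "Leps w = 0"
proof -
  have "Leps w \<in> {0}"
  proof (rule tspace_map[OF flin_Leps IG_fin IG_fin fvs.subspace_single_0 _ assms])
    fix u v :: "'g \<Rightarrow> 'k" assume u: "u \<in> IGpow G (Suc p)" and v: "v \<in> IGpow G q"
    have "u \<in> IGpow G (Suc 0)" using u IG_anti[of "Suc 0" "Suc p"] by auto
    then have "eps u = 0" by (simp add: IG1 augI_eps)
    moreover have "u \<in> fin" "v \<in> fin" using u v IG_fin by auto
    ultimately show "Leps (tens u v) \<in> {0}" by (simp add: Leps_tens)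
  qed
  then show ?thesis by simp
qed

lemma sub_contains_e:
  fixes W :: "(nat \<times> 'g \<Rightarrow> 'k::field) set"
  assumes W: "DG_subcoalgebra G W" and W0: "W \<noteq> grZer (IGpow G)"
  shows "eG \<in> W"
proof -
  let ?F = "IGpow G :: nat \<Rightarrow> ('g \<Rightarrow> 'k) set"
  have ZW: "grZer ?F \<subseteq> W" and WR: "W \<subseteq> grRep ?F" and Wsp: "lspan W = W"
    and co: "\<And>x. x \<in> W \<Longrightarrow> \<exists>y. induced_rel ?F ?F ?F comulG x y \<and>
        y \<in> lspan ({tens u v | u v. u \<in> W \<and> v \<in> W} \<union> tZer ?F ?F)"
    using W unfolding DG_subcoalgebra_def by auto
  have Wsub: "fvs.subspace W" using Wsp unfolding lspan_eq by (metis fvs.subspace_span)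
  have Wfin: "W \<subseteq> fin" using WR grRep_fin by blast
  obtain x where x: "x \<in> W" "x \<notin> grZer ?F" using ZW W0 by blast
  have xR: "x \<in> grRep ?F" using x WR by blast
  have xf: "finite (supp x)" and xs: "\<And>n. slice x n \<in> ?F n" using xR by (auto simp: grRep_def)
  define N where "N = {n. slice x n \<notin> ?F (Suc n)}"
  have NS: "N \<subseteq> fst ` supp x"
  proof
    fix n assume n: "n \<in> N"
    show "n \<in> fst ` supp x"
    proof (rule ccontr)
      assume "n \<notin> fst ` supp x"
      then have "slice x n = 0" by (force simp: slice_def fun_eq_iff zero_fun_def image_iff)
      moreover have "(0::'g \<Rightarrow> 'k) \<in> ?F (Suc n)" by (rule fvs.subspace_0[OF IG_subspace])
      ultimately show False using n by (simp add: N_def)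
    qed
  qed
  have Nfin: "finite N" using NS xf by (meson finite_imageI finite_subset)
  have Nne: "N \<noteq> {}"
  proof
    assume "N = {}"
    then have "\<forall>n. slice x n \<in> ?F (Suc n)" by (auto simp: N_def)
    then show False using x(2) xf by (simp add: grZer_def)
  qed
  define m where "m = Max N"
  have mN: "m \<in> N" using Nfin Nne by (simp add: m_def)
  have mmax: "\<And>n. n \<in> N \<Longrightarrow> n \<le> m" using Nfin by (simp add: m_def)
  define x' where "x' = (\<lambda>(n, g). if n \<le> m then x (n, g) else 0)"
  have sx': "slice x' n = (if n \<le> m then slice x n else 0)" for n
    by (auto simp: slice_def x'_def fun_eq_iff zero_fun_def)
  have x'f: "finite (supp x')"
    using xf by (rule finite_subset[rotated]) (auto simp: supp_def x'_def split: if_splits)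
  have "x - x' \<in> grZer ?F"
  proof -
    have "supp (x - x') \<subseteq> supp x \<union> supp x'" by (rule supp_diff)
    then have "finite (supp (x - x'))" using xf x'f by (meson finite_Un finite_subset)
    moreover have "slice (x - x') n \<in> ?F (Suc n)" for n
    proof (cases "n \<le> m")
      case True then show ?thesis
        by (simp add: slice_diff sx' fvs.subspace_0[OF IG_subspace])
    next
      case False
      then have "n \<notin> N" using mmax by force
      then show ?thesis using False by (simp add: slice_diff sx' N_def)
    qed
    ultimately show ?thesis by (simp add: grZer_def)
  qed
  then have x'W: "x' \<in> W"
    using fvs.subspace_diff[OF Wsub x(1), of "x - x'"] ZW by auto
  obtain y where r: "induced_rel ?F ?F ?F comulG x' y"
    and yW: "y \<in> fvs.span ({tens u v | u v. u \<in> W \<and> v \<in> W} \<union> tZer ?F ?F)"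
    using co[OF x'W] unfolding lspan_eq by blast
  have yR: "y \<in> tRep ?F ?F" using r by (simp add: induced_rel_def)
  have yf: "y \<in> fin" using tRep_fin[OF yR] .
  define x0 where "x0 = slice x m"
  have x0F: "x0 \<in> ?F m" using xs by (simp add: x0_def)
  have x0nF: "x0 \<notin> ?F (Suc m)" using mN by (simp add: N_def x0_def)
  have sx'm: "slice x' m = x0" by (simp add: sx' x0_def)
  obtain f :: "('g \<Rightarrow> 'k) \<Rightarrow> 'k" where f: "Vector_Spaces.linear sc (*) f"
    "\<And>u. u \<in> ?F (Suc m) \<Longrightarrow> f u = 0" "f x0 = 1"
    using functional_exists[OF IG_subspace x0nF] by blast
  define \<Theta> :: "((nat \<times> 'g) \<times> (nat \<times> 'g) \<Rightarrow> 'k) \<Rightarrow> (nat \<times> 'g \<Rightarrow> 'k)" where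
    "\<Theta> = (\<lambda>Y. Rf f (Pm m Y))"
  have sTh: "slice (\<Theta> Y) j = Rf f (slice2 Y j m)" for Y j
    by (simp add: \<Theta>_def slice_def Rf_def Pm_def slice2_def fun_eq_iff)
  have fTh: "flin \<Theta>" unfolding \<Theta>_def by (rule flin_comp[OF flin_Rf[OF f(1)] flin_Pm fin_Pm])
  have Thf: "\<Theta> Y \<in> fin" if "Y \<in> fin" for Y
    unfolding \<Theta>_def by (rule fin_Rf[OF f(1) fin_Pm[OF that]])
  have Th_tens: "\<Theta> (tens u v) = sc (f (slice v m)) u" for u v :: "nat \<times> 'g \<Rightarrow> 'k"
    unfolding \<Theta>_def Pm_tens Rf_tens[OF f(1)] by (simp add: slice_def)
  have Th_zer: "\<Theta> Y \<in> grZer ?F" if Y: "Y \<in> tZer ?F ?F" for Y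
  proof -
    have "Y \<in> fin" using Y by (simp add: tZer_def fin_iff)
    then have "finite (supp (\<Theta> Y))" using Thf by (simp add: fin_iff)
    moreover have "slice (\<Theta> Y) p \<in> ?F (Suc p)" for p
    proof -
      have "slice2 Y p m \<in> lspan (tspace (?F (Suc p)) (?F m) \<union> tspace (?F p) (?F (Suc m)))"
        using Y unfolding tZer_def by blast
      then show ?thesis unfolding sTh lspan_eq using Rf_zer[OF f(1) IG_filt f(2)] by blast
    qed
    ultimately show ?thesis by (simp add: grZer_def)
  qed
  have ThW: "\<Theta> y \<in> W"
  proof (rule flin_span[OF fTh _ Wsub _ yW])
    show "{tens u v |u v. u \<in> W \<and> v \<in> W} \<union> tZer ?F ?F \<subseteq> fin"
      using Wfin by (auto simp: tZer_def fin_iff intro!: fin_tens)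
    fix Y assume "Y \<in> {tens u v |u v. u \<in> W \<and> v \<in> W} \<union> tZer ?F ?F"
    then show "\<Theta> Y \<in> W"
    proof
      assume "Y \<in> {tens u v |u v. u \<in> W \<and> v \<in> W}"
      then obtain u v where "Y = tens u v" "u \<in> W" by blast
      then show ?thesis using Th_tens fvs.subspace_scale[OF Wsub] by simp
    next
      assume "Y \<in> tZer ?F ?F"
      then show ?thesis using Th_zer ZW by blast
    qed
  qed
  have pos: "Rf f (slice2 y (Suc p) m) \<in> ?F (Suc (Suc p))" for p
  proof -
    define n where "n = Suc p + m"
    have "(\<Sum>p'\<in>{0..n}. slice2 y p' (n - p')) - comulG (slice x' n) \<in> tFil ?F ?F (Suc n)"
      by (rule induced_rel_sum[OF r])
    moreover have "slice x' n = 0" by (simp add: sx' n_def)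
    ultimately have S: "(\<Sum>p'\<in>{0..n}. slice2 y p' (n - p')) \<in> tFil ?F ?F (Suc n)" by simp
    have "slice2 y (Suc p) (n - Suc p) \<in> lspan (tspace (?F (Suc (Suc p))) (?F (n - Suc p)) \<union> tspace (?F (Suc p)) (?F (Suc (n - Suc p))))"
      by (rule KL[OF IG_filt IG_filt _ S]) (auto simp: n_def tRep_slice[OF yR])
    moreover have "n - Suc p = m" by (simp add: n_def)
    ultimately have "slice2 y (Suc p) m \<in> fvs.span (tspace (?F (Suc (Suc p))) (?F m) \<union> tspace (?F (Suc p)) (?F (Suc m)))"
      unfolding lspan_eq by simp
    then show ?thesis using Rf_zer[OF f(1) IG_filt f(2)] by blast
  qed
  define w0 where "w0 = slice2 y 0 m"
  have w0T: "w0 \<in> tspace (?F 0) (?F m)" unfolding w0_def by (rule tRep_slice[OF yR])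
  have w0f: "w0 \<in> fin" unfolding w0_def by (rule slice2_fin[OF yf])
  have d1f: "(delta \<one> :: 'g \<Rightarrow> 'k) \<in> fin" by simp
  have A: "w0 - tens (delta \<one>) (Leps w0) \<in> tspace (?F (Suc 0)) (?F m)"
  proof (rule tspace_map[OF _ IG_fin IG_fin tspace_subspace _ w0T])
    show "flin (\<lambda>w. w - tens (delta \<one>) (Leps w) :: 'g \<times> 'g \<Rightarrow> 'k)"
    proof (rule flin_minus[OF flin_id])
      show "flin (\<lambda>w. tens (delta \<one>) (Leps w) :: 'g \<times> 'g \<Rightarrow> 'k)"
        unfolding flin_def
        by (simp add: flin_add[OF flin_Leps] flin_sc[OF flin_Leps] tens_add2 tens_sc2)
    qed
    fix u v :: "'g \<Rightarrow> 'k" assume u: "u \<in> ?F 0" and v: "v \<in> ?F m"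
    have uf: "u \<in> fin" using u IG_fin[of 0] by blast
    have vf: "v \<in> fin" using v IG_fin[of m] by blast
    have e: "tens u v - tens (delta \<one>) (Leps (tens u v)) = tens (u - sc (eps u) (delta \<one>)) v"
      unfolding Leps_tens[OF uf vf] tens_sc2 tens_diff1 tens_sc1 ..
    have "u - sc (eps u) (delta \<one>) \<in> augI G"
    proof -
      have "u - sc (eps u) (delta \<one>) \<in> free (carrier G)"
        using u by (intro fvs.subspace_diff[OF free_subspace] fvs.subspace_scale[OF free_subspace] delta_free) auto
      moreover have "eps (u - sc (eps u) (delta \<one>)) = 0"
        by (simp add: eps_diff[OF uf fin_sc[OF fin_delta]] eps_sc)
      ultimately show ?thesis by (simp add: augI_eps)
    qed
    then show "tens u v - tens (delta \<one>) (Leps (tens u v)) \<in> tspace (?F (Suc 0)) (?F m)"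
      unfolding e by (intro tens_in_tspace v) (simp add: IG1)
  qed
  have B: "Leps w0 - x0 \<in> ?F (Suc m)"
  proof -
    let ?S = "\<Sum>p\<in>{0..m}. slice2 y p (m - p)"
    have S: "?S - comulG x0 \<in> tFil ?F ?F (Suc m)"
      using induced_rel_sum[OF r, of m] by (simp add: sx'm)
    have sf: "\<And>p. slice2 y p (m - p) \<in> fin" using slice2_fin[OF yf] by blast
    have Sf: "?S \<in> fin" using sf by (intro fin_sum) auto
    have x0f: "x0 \<in> fin" using x0F IG_fin by auto
    have "Leps (?S - comulG x0) \<in> ?F (Suc m)"
    proof (rule flin_span[OF flin_Leps _ IG_subspace])
      show "?S - comulG x0 \<in> fvs.span (\<Union>p\<in>{0..Suc m}. tspace (?F p) (?F (Suc m - p)))"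
        using S unfolding tFil_def lspan_eq .
      show "(\<Union>p\<in>{0..Suc m}. tspace (?F p) (?F (Suc m - p))) \<subseteq> fin"
        using tspace_fin[OF IG_fin IG_fin] by blast
      fix w assume "w \<in> (\<Union>p\<in>{0..Suc m}. tspace (?F p) (?F (Suc m - p)))"
      then obtain p where p: "p \<le> Suc m" "w \<in> tspace (?F p) (?F (Suc m - p))" by auto
      show "Leps w \<in> ?F (Suc m)"
      proof (cases p)
        case 0
        show ?thesis
        proof (rule tspace_map[OF flin_Leps IG_fin IG_fin IG_subspace _ p(2)])
          fix u v :: "'g \<Rightarrow> 'k" assume u: "u \<in> ?F p" and v: "v \<in> ?F (Suc m - p)"
          have uf: "u \<in> fin" using u IG_fin[of p] by blast
          have vf: "v \<in> fin" using v IG_fin[of "Suc m - p"] by blast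
          show "Leps (tens u v) \<in> ?F (Suc m)"
            unfolding Leps_tens[OF uf vf] using v 0 by (auto intro!: fvs.subspace_scale[OF IG_subspace])
        qed
      next
        case (Suc p')
        then show ?thesis using Leps_zero_pos[of w p'] p(2) fvs.subspace_0[OF IG_subspace] by simp
      qed
    qed
    moreover have "Leps (?S - comulG x0) = Leps w0 - x0"
    proof -
      have "Leps (?S - comulG x0) = Leps ?S - Leps (comulG x0)"
        by (rule flin_diff[OF flin_Leps Sf]) (use x0f in \<open>auto simp: comulG_as_lin intro!: lin_fin\<close>)
      also have "Leps (comulG x0) = x0" by (rule Leps_comulG[OF x0f])
      also have "Leps ?S = (\<Sum>p\<in>{0..m}. Leps (slice2 y p (m - p)))"
        by (rule flin_sum1[OF flin_Leps]) (use sf in auto)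
      also have "\<dots> = Leps (slice2 y 0 (m - 0)) + (\<Sum>p\<in>{0..m} - {0}. Leps (slice2 y p (m - p)))"
        by (subst sum.remove[of _ 0]) auto
      also have "(\<Sum>p\<in>{0..m} - {0}. Leps (slice2 y p (m - p))) = 0"
      proof (rule sum.neutral, rule ballI)
        fix p assume "p \<in> {0..m} - {0}"
        then obtain p' where "p = Suc p'" by (cases p) auto
        then show "Leps (slice2 y p (m - p)) = 0"
          using Leps_zero_pos tRep_slice[OF yR] by blast
      qed
      finally show ?thesis by (simp add: w0_def)
    qed
    ultimately show ?thesis by simp
  qed
  have zero_slice: "Rf f w0 - delta \<one> \<in> ?F (Suc 0)"
  proof -
    have Lf: "Leps w0 \<in> fin" using w0f flin_Leps unfolding Leps_def by (auto intro!: lin_fin)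
    have "Rf f (w0 - tens (delta \<one>) (Leps w0)) \<in> ?F (Suc 0)"
    proof (rule tspace_map[OF flin_Rf[OF f(1)] IG_fin IG_fin IG_subspace _ A])
      fix u v :: "'g \<Rightarrow> 'k" assume "u \<in> ?F (Suc 0)" "v \<in> ?F m"
      then show "Rf f (tens u v) \<in> ?F (Suc 0)"
        by (simp add: Rf_tens[OF f(1)] fvs.subspace_scale[OF IG_subspace])
    qed
    moreover have "Rf f (tens (delta \<one>) (Leps w0)) = delta \<one>"
    proof -
      have "f (Leps w0) = f x0 + f (Leps w0 - x0)"
        using f(1) unfolding linear_iff by (metis add_diff_cancel_left' diff_add_cancel)
      then have "f (Leps w0) = 1" using f(2)[OF B] f(3) by simp
      then show ?thesis by (simp add: Rf_tens[OF f(1)] sc_def)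
    qed
    moreover have "Rf f w0 = Rf f (w0 - tens (delta \<one>) (Leps w0)) + Rf f (tens (delta \<one>) (Leps w0))"
      using flin_Rf[OF f(1)] w0f Lf unfolding flin_def
      by (metis diff_add_cancel fin_diff fin_tens fin_delta)
    ultimately show ?thesis by simp
  qed
  have "\<Theta> y - eG \<in> grZer ?F"
  proof -
    have "\<Theta> y - eG \<in> fin" using Thf[OF yf] eG_fin by auto
    moreover have "slice (\<Theta> y - eG) p \<in> ?F (Suc p)" for p
    proof (cases p)
      case 0 then show ?thesis using zero_slice by (simp add: slice_diff sTh slice_eG w0_def)
    next
      case (Suc p') then show ?thesis using pos[of p'] by (simp add: slice_diff sTh slice_eG)
    qed
    ultimately show ?thesis by (simp add: grZer_def fin_iff)
  qed
  then have "\<Theta> y - (\<Theta> y - eG) \<in> W" using fvs.subspace_diff[OF Wsub ThW] ZW by blast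
  then show ?thesis by simp
qed

lemma DG_irred: "DG_irreducible TYPE('k::field) G"
  unfolding DG_irreducible_def
proof (intro allI impI)
  fix W1 W2 :: "(nat \<times> 'g \<Rightarrow> 'k) set"
  assume h: "DG_subcoalgebra G W1 \<and> DG_subcoalgebra G W2 \<and> W1 \<noteq> grZer (IGpow G) \<and> W2 \<noteq> grZer (IGpow G)"
  then have "eG \<in> W1" "eG \<in> W2" using sub_contains_e by auto
  then show "W1 \<inter> W2 \<noteq> grZer (IGpow G)" using eG_not_zer by auto
qed

end


section \<open>Group-like graphs\<close>

lemma lin_in_subspace:
  assumes V: "fvs.subspace V" and h: "\<And>x. x \<in> supp u \<Longrightarrow> \<phi> x \<in> V"
  shows "lin \<phi> u \<in> V"
  unfolding lin_as_sum
  by (rule fvs.subspace_sum[OF V]) (use h fvs.subspace_scale[OF V] in auto)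

lemma lin_swap: "lin (\<lambda>x. lin (\<lambda>y. F x y) v) u = lin (\<lambda>y. lin (\<lambda>x. F x y) u) v"
proof (rule ext)
  fix z
  show "lin (\<lambda>x. lin (\<lambda>y. F x y) v) u z = lin (\<lambda>y. lin (\<lambda>x. F x y) u) v z"
    unfolding lin_def sum_distrib_left
    by (subst sum.swap) (rule sum.cong[OF refl], rule sum.cong[OF refl], simp only: ac_simps)
qed

lemma lin_diff_delta: "lin \<phi> (delta x - delta y) = \<phi> x - \<phi> y"
  by (simp add: flin_diff[OF flin_lin])

lemma tmap_comp:
  assumes "flin \<alpha>" "flin \<beta>" "X \<in> fin" "\<And>x. \<alpha>' (delta x) \<in> fin" "\<And>y. \<beta>' (delta y) \<in> fin"
  shows "tmap \<alpha> \<beta> (tmap \<alpha>' \<beta>' X) = lin (\<lambda>xy. tens (\<alpha> (\<alpha>' (delta (fst xy)))) (\<beta> (\<beta>' (delta (snd xy))))) X"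
proof -
  have "tmap \<alpha> \<beta> (tmap \<alpha>' \<beta>' X) = lin (\<lambda>xy. tmap \<alpha> \<beta> (tens (\<alpha>' (delta (fst xy))) (\<beta>' (delta (snd xy))))) X"
  proof -
    have ft: "flin (tmap \<alpha> \<beta>)" unfolding tmap_def by (rule flin_lin)
    show ?thesis unfolding tmap_def[of \<alpha>' \<beta>'] by (rule flin_lin_apply[OF ft assms(3)]) (use assms in auto)
  qed
  also have "\<dots> = lin (\<lambda>xy. tens (\<alpha> (\<alpha>' (delta (fst xy)))) (\<beta> (\<beta>' (delta (snd xy))))) X"
    by (rule lin_fun_cong) (use assms in \<open>simp add: tmap_tens\<close>)
  finally show ?thesis .
qed

lemma tens_in_tFil: "p \<le> j \<Longrightarrow> u \<in> F p \<Longrightarrow> w \<in> F' (j - p) \<Longrightarrow> tens u w \<in> tFil F F' j"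
  unfolding tFil_def lspan_eq by (intro fvs.span_base UN_I[of p]) (auto intro: tens_in_tspace)

lemma tFil_map:
  assumes F: "filt F" and F': "filt F'" and L: "flin L" and V: "fvs.subspace V" and X: "X \<in> tFil F F' j"
    and gen: "\<And>p u w. p \<le> j \<Longrightarrow> u \<in> F p \<Longrightarrow> w \<in> F' (j - p) \<Longrightarrow> L (tens u w) \<in> V"
  shows "L X \<in> V"
proof (rule flin_span[OF L _ V])
  show "X \<in> fvs.span (\<Union>p\<in>{0..j}. tspace (F p) (F' (j - p)))" using X unfolding tFil_def lspan_eq .
  show "(\<Union>p\<in>{0..j}. tspace (F p) (F' (j - p))) \<subseteq> fin"
    using tspace_fin[OF filt_fin[OF F] filt_fin[OF F']] by blast
  fix x assume "x \<in> (\<Union>p\<in>{0..j}. tspace (F p) (F' (j - p)))"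
  then obtain p where p: "p \<le> j" "x \<in> tspace (F p) (F' (j - p))" by auto
  show "L x \<in> V"
    by (rule tspace_map[OF L filt_fin[OF F] filt_fin[OF F'] V _ p(2)]) (use gen p(1) in auto)
qed

lemma tens_free: "u \<in> free X \<Longrightarrow> w \<in> free Y \<Longrightarrow> tens u w \<in> free (X \<times> Y)"
  by (auto simp: free_def supp_tens)

lemma lin_const: "lin (\<lambda>_. X) i = sc (eps i) X"
  by (simp add: lin_def eps_sum fun_eq_iff sc_apply sum_distrib_right)

lemma lin_fun_diff: "lin (\<lambda>y. f y - g y) i = lin f i - lin g i"
  by (simp add: lin_def fun_eq_iff minus_apply sum_subtractf right_diff_distrib)

locale glgraph = galg G for G :: "('g, 'm) monoid_scheme" (structure) +
  fixes A :: "'a set" and s t :: "'a \<Rightarrow> 'g" and lact :: "'g \<Rightarrow> 'a \<Rightarrow> 'a" and ract :: "'a \<Rightarrow> 'g \<Rightarrow> 'a"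
  assumes glg: "group_like_graph G A s t lact ract"
begin

lemma st_closed: "a \<in> A \<Longrightarrow> s a \<in> carrier G" "a \<in> A \<Longrightarrow> t a \<in> carrier G"
  using glg unfolding group_like_graph_def by auto
lemma act_closed: "g \<in> carrier G \<Longrightarrow> a \<in> A \<Longrightarrow> lact g a \<in> A"
    "g \<in> carrier G \<Longrightarrow> a \<in> A \<Longrightarrow> ract a g \<in> A"
  using glg unfolding group_like_graph_def by auto
lemma act_one: "a \<in> A \<Longrightarrow> lact \<one> a = a" "a \<in> A \<Longrightarrow> ract a \<one> = a"
  using glg unfolding group_like_graph_def by auto
lemma act_mult:
  assumes "g \<in> carrier G" "h \<in> carrier G" "a \<in> A"
  shows "lact (g \<otimes> h) a = lact g (lact h a)" "ract a (g \<otimes> h) = ract (ract a g) h"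
    "ract (lact g a) h = lact g (ract a h)"
  using glg assms unfolding group_like_graph_def by auto
lemma st_equiv:
  assumes "g \<in> carrier G" "a \<in> A"
  shows "s (lact g a) = g \<otimes> s a" "t (lact g a) = g \<otimes> t a" "s (ract a g) = s a \<otimes> g" "t (ract a g) = t a \<otimes> g"
  using glg assms unfolding group_like_graph_def by auto

abbreviation FA :: "nat \<Rightarrow> ('a \<Rightarrow> 'k::field) set" where "FA \<equiv> IApow G A lact ract"

definition genA :: "'a \<Rightarrow> ('g \<Rightarrow> 'k::field) \<Rightarrow> ('g \<Rightarrow> 'k) \<Rightarrow> 'a \<Rightarrow> 'k" where
  "genA a v1 v2 = rmulA ract (lmulA lact v1 (delta a)) v2"

lemma lmulA_as_lin: "lmulA lact v w = lin (\<lambda>g. lin (\<lambda>b. delta (lact g b)) w) v"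
  unfolding lmulA_def lin_def sum_distrib_left
  by (rule ext, intro sum.cong refl) (auto simp: delta_def)

lemma rmulA_as_lin: "rmulA ract w v = lin (\<lambda>b. lin (\<lambda>h. delta (ract b h)) v) w"
  unfolding rmulA_def lin_def sum_distrib_left
  by (rule ext, intro sum.cong refl) (auto simp: delta_def)

lemma genA_lin: "v1 \<in> fin \<Longrightarrow> genA a v1 v2 = lin (\<lambda>g. lin (\<lambda>h. delta (ract (lact g a) h)) v2) v1"
  unfolding genA_def rmulA_as_lin lmulA_as_lin
  by (subst lin_lin) auto

lemma genA_free:
  fixes v1 v2 :: "'g \<Rightarrow> 'k::field"
  assumes "a \<in> A" "v1 \<in> free (carrier G)" "v2 \<in> free (carrier G)"
  shows "genA a v1 v2 \<in> free A"
  unfolding genA_lin[OF free_fin'[OF assms(2)]]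
proof (rule lin_free[OF free_fin'[OF assms(2)]])
  fix g assume g: "g \<in> supp v1"
  show "lin (\<lambda>h. delta (ract (lact g a) h)) v2 \<in> free A"
  proof (rule lin_free[OF free_fin'[OF assms(3)]])
    fix h assume h: "h \<in> supp v2"
    have "ract (lact g a) h \<in> A"
      using g h free_supp[OF assms(2)] free_supp[OF assms(3)] assms(1)
      by (intro act_closed) auto
    then show "(delta (ract (lact g a) h) :: 'a \<Rightarrow> 'k) \<in> free A" by (rule delta_free)
  qed
qed

lemma FA_gens: "FA n = fvs.span {genA a v1 v2 | v1 v2 a k. k \<le> n \<and> a \<in> A \<and> v1 \<in> IGpow G k \<and> v2 \<in> IGpow G (n - k)}"
  unfolding IApow_def lspan_eq genA_def ..

lemma FA_free: "FA n \<subseteq> free A"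
  unfolding FA_gens
  by (rule fvs.span_minimal[OF _ free_subspace]) (auto intro!: genA_free IG_free')

lemma FA_fin: "FA n \<subseteq> fin" using FA_free free_fin by blast

lemma FA_subspace: "fvs.subspace (FA n)" unfolding FA_gens by simp

lemma genA_in: "k \<le> n \<Longrightarrow> a \<in> A \<Longrightarrow> v1 \<in> IGpow G k \<Longrightarrow> v2 \<in> IGpow G (n - k) \<Longrightarrow> genA a v1 v2 \<in> FA n"
  unfolding FA_gens by (rule fvs.span_base) blast

lemma FA_mono: "(FA (Suc n) :: ('a \<Rightarrow> 'k::field) set) \<subseteq> FA n"
  unfolding FA_gens[of "Suc n"]
proof (rule fvs.span_minimal[OF _ FA_subspace], clarify)
  fix v1 v2 :: "'g \<Rightarrow> 'k" and a k assume h: "k \<le> Suc n" "a \<in> A" "v1 \<in> IGpow G k" "v2 \<in> IGpow G (Suc n - k)"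
  show "genA a v1 v2 \<in> FA n"
  proof (cases "k \<le> n")
    case True
    have "IGpow G (Suc n - k) \<subseteq> IGpow G (n - k)" by (rule IG_anti) simp
    then have "v2 \<in> IGpow G (n - k)" using h(4) by blast
    then show ?thesis using True h by (intro genA_in) auto
  next
    case False
    then have k: "k = Suc n" using h(1) by simp
    have "v1 \<in> IGpow G n" using h(3) k IG_mono by auto
    moreover have "v2 \<in> IGpow G (n - n)" using h(4) k by simp
    ultimately show ?thesis using h(2) by (intro genA_in) auto
  qed
qed

lemma FA_filt: "filt FA"
  unfolding filt_def using FA_subspace FA_mono FA_fin by blast

lemma gmul_delta_left: "u \<in> fin \<Longrightarrow> gmul G (delta g) u = lin (\<lambda>x. delta (g \<otimes> x)) u"
  unfolding gmul_as_lin by simp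

lemma gmul_delta_right: "u \<in> fin \<Longrightarrow> gmul G u (delta h) = lin (\<lambda>x. delta (x \<otimes> h)) u"
  unfolding gmul_as_lin by simp

lemma gmul_one_left: "u \<in> free (carrier G) \<Longrightarrow> gmul G (delta \<one>) u = u"
proof -
  assume u: "u \<in> free (carrier G)"
  have "gmul G (delta \<one>) u = lin (\<lambda>x. delta (\<one> \<otimes> x)) u" by (rule gmul_delta_left[OF free_fin'[OF u]])
  also have "\<dots> = lin delta u" by (rule lin_fun_cong) (use free_supp[OF u] in auto)
  finally show ?thesis using lin_expand[OF free_fin'[OF u]] by simp
qed

lemma gmul_one_right: "u \<in> free (carrier G) \<Longrightarrow> gmul G u (delta \<one>) = u"
proof -
  assume u: "u \<in> free (carrier G)"
  have "gmul G u (delta \<one>) = lin (\<lambda>x. delta (x \<otimes> \<one>)) u" by (rule gmul_delta_right[OF free_fin'[OF u]])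
  also have "\<dots> = lin delta u" by (rule lin_fun_cong) (use free_supp[OF u] in auto)
  finally show ?thesis using lin_expand[OF free_fin'[OF u]] by simp
qed

lemma delta_aug: "y \<in> carrier G \<Longrightarrow> (delta y - delta \<one> :: 'g \<Rightarrow> 'k::field) \<in> augI G"
  unfolding augI_eps
  by (auto intro!: fvs.subspace_diff[OF free_subspace] delta_free simp: eps_diff)

lemma aug_IG1: "u \<in> augI G \<Longrightarrow> u \<in> IGpow G (Suc 0)" by (simp add: IG1)

definition cA :: "'g \<Rightarrow> 'g \<Rightarrow> ('a \<Rightarrow> 'k::field) \<Rightarrow> ('a \<Rightarrow> 'k)" where
  "cA g h = lin (\<lambda>b. delta (ract (lact g b) h))"

definition cG :: "'g \<Rightarrow> 'g \<Rightarrow> ('g \<Rightarrow> 'k::field) \<Rightarrow> ('g \<Rightarrow> 'k)" where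
  "cG g h = lin (\<lambda>x. delta (g \<otimes> x \<otimes> h))"

definition Conj :: "'g \<Rightarrow> 'g \<Rightarrow> ('a \<times> 'g \<Rightarrow> 'k::field) \<Rightarrow> ('a \<times> 'g \<Rightarrow> 'k)" where
  "Conj g h = tmap (cA g h) (cG g h)"

lemma flin_cA: "flin (cA g h)" unfolding cA_def by (rule flin_lin)
lemma flin_cG: "flin (cG g h)" unfolding cG_def by (rule flin_lin)
lemma flin_Conj: "flin (Conj g h)" unfolding Conj_def tmap_def by (rule flin_lin)

lemma Conj_tens: "u \<in> fin \<Longrightarrow> w \<in> fin \<Longrightarrow> Conj g h (tens u w) = tens (cA g h u) (cG g h w)"
  unfolding Conj_def by (rule tmap_tens[OF flin_cA flin_cG])

lemma cA_genA:
  fixes v1 v2 :: "'g \<Rightarrow> 'k::field"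
  assumes g: "g \<in> carrier G" and h: "h \<in> carrier G" and a: "a \<in> A"
    and v1: "v1 \<in> free (carrier G)" and v2: "v2 \<in> free (carrier G)"
  shows "cA g h (genA a v1 v2) = genA a (gmul G (delta g) v1) (gmul G v2 (delta h))"
proof -
  have f1: "v1 \<in> fin" and f2: "v2 \<in> fin" using v1 v2 by (auto intro: free_fin')
  have f3: "gmul G (delta g) v1 \<in> fin" using f1 by (auto simp: gmul_delta_left intro!: lin_fin)
  have "cA g h (genA a v1 v2) = lin (\<lambda>g'. lin (\<lambda>h'. delta (ract (lact g (ract (lact g' a) h')) h)) v2) v1"
    unfolding genA_lin[OF f1] cA_def
    by (subst lin_lin[OF f1], use f2 in \<open>auto intro!: lin_fin\<close>, rule lin_fun_cong, subst lin_lin[OF f2]) auto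
  also have "\<dots> = lin (\<lambda>g'. lin (\<lambda>h'. delta (ract (lact (g \<otimes> g') a) (h' \<otimes> h))) v2) v1"
  proof (rule lin_fun_cong, rule lin_fun_cong)
    fix g' h' assume "g' \<in> supp v1" "h' \<in> supp v2"
    then have g': "g' \<in> carrier G" and h': "h' \<in> carrier G" using free_supp v1 v2 by auto
    have "ract (lact g (ract (lact g' a) h')) h = ract (ract (lact g (lact g' a)) h') h"
      using act_mult(3)[OF g h' act_closed(1)[OF g' a]] by simp
    also have "\<dots> = ract (lact (g \<otimes> g') a) (h' \<otimes> h)"
      using act_mult(2)[OF h' h, of "lact g (lact g' a)"] act_mult(1)[OF g g' a]
        act_closed[OF g act_closed(1)[OF g' a]] by simp
    finally show "delta (ract (lact g (ract (lact g' a) h')) h) = delta (ract (lact (g \<otimes> g') a) (h' \<otimes> h))"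
      by simp
  qed
  also have "\<dots> = genA a (gmul G (delta g) v1) (gmul G v2 (delta h))"
  proof -
    have f3': "lin (\<lambda>x. delta (g \<otimes> x)) v1 \<in> fin" using f1 by (auto intro!: lin_fin)
    show ?thesis
      unfolding gmul_delta_left[OF f1] gmul_delta_right[OF f2] genA_lin[OF f3']
      by (subst lin_lin[OF f1], simp, rule lin_fun_cong, subst lin_lin[OF f2]) auto
  qed
  finally show ?thesis .
qed

lemma cA_FA:
  assumes g: "g \<in> carrier G" and h: "h \<in> carrier G" and u: "u \<in> FA p"
  shows "cA g h u \<in> FA p"
proof (rule flin_span[OF flin_cA _ FA_subspace])
  show "u \<in> fvs.span {genA a v1 v2 | v1 v2 a k. k \<le> p \<and> a \<in> A \<and> v1 \<in> IGpow G k \<and> v2 \<in> IGpow G (p - k)}"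
    using u unfolding FA_gens .
  show "{genA a v1 v2 | v1 v2 a k. k \<le> p \<and> a \<in> A \<and> v1 \<in> IGpow G k \<and> v2 \<in> IGpow G (p - k)} \<subseteq> fin"
    using genA_free free_fin IG_free' by blast
  fix x assume "x \<in> {genA a v1 v2 | v1 v2 a k. k \<le> p \<and> a \<in> A \<and> v1 \<in> IGpow G k \<and> v2 \<in> IGpow G (p - k)}"
  then obtain v1 v2 a k where x: "x = genA a v1 v2" "k \<le> p" "a \<in> A" "v1 \<in> IGpow G k" "v2 \<in> IGpow G (p - k)"
    by blast
  have "gmul G (delta g) v1 \<in> IGpow G (0 + k)" using IG_mult[of "delta g" 0 v1 k] x(4) g by (simp add: delta_free)
  moreover have "gmul G v2 (delta h) \<in> IGpow G (p - k)" by (rule IG_right[OF x(5) delta_free[OF h]])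
  ultimately show "cA g h x \<in> FA p"
    unfolding x(1) using x g h by (subst cA_genA) (auto intro!: genA_in IG_free')
qed

lemma cG_gmul: "w \<in> free (carrier G) \<Longrightarrow> g \<in> carrier G \<Longrightarrow> h \<in> carrier G \<Longrightarrow>
    cG g h w = gmul G (gmul G (delta g) w) (delta h)"
proof -
  assume w: "w \<in> free (carrier G)" and g: "g \<in> carrier G" and h: "h \<in> carrier G"
  have wf: "w \<in> fin" using w by (rule free_fin')
  have f3: "lin (\<lambda>x. delta (g \<otimes> x)) w \<in> fin" using wf by (auto intro!: lin_fin)
  show ?thesis
    unfolding gmul_delta_left[OF wf] gmul_delta_right[OF f3] cG_def
    by (subst lin_lin[OF wf]) auto
qed

lemma cG_IG: "w \<in> IGpow G q \<Longrightarrow> g \<in> carrier G \<Longrightarrow> h \<in> carrier G \<Longrightarrow> cG g h w \<in> IGpow G q"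
proof -
  assume w: "w \<in> IGpow G q" and g: "g \<in> carrier G" and h: "h \<in> carrier G"
  have "gmul G (delta g) w \<in> IGpow G (0 + q)" by (rule IG_mult) (use w delta_free[OF g] in auto)
  then have "gmul G (gmul G (delta g) w) (delta h) \<in> IGpow G q"
    using IG_right delta_free[OF h] by simp
  then show ?thesis using cG_gmul[OF IG_free'[OF w] g h] by simp
qed

lemma cG_left: "w \<in> IGpow G q \<Longrightarrow> y \<in> carrier G \<Longrightarrow> cG y \<one> w - w \<in> IGpow G (Suc q)"
proof -
  assume w: "w \<in> IGpow G q" and y: "y \<in> carrier G"
  have wf: "w \<in> free (carrier G)" using w by (rule IG_free')
  have "cG y \<one> w - w = gmul G (delta y - delta \<one>) w"
    using flin_diff[OF flin_gmul1[where G=G and v=w] fin_delta fin_delta, of y "\<one>"]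
    by (simp add: cG_gmul[OF wf y one_closed] gmul_one_right[OF gmul_free[OF delta_free[OF y] wf]]
        gmul_one_left[OF wf])
  also have "\<dots> \<in> IGpow G (Suc 0 + q)" by (rule IG_mult[OF aug_IG1[OF delta_aug[OF y]] w])
  finally show ?thesis by simp
qed

lemma cG_right: "w \<in> IGpow G q \<Longrightarrow> y \<in> carrier G \<Longrightarrow> cG \<one> y w - w \<in> IGpow G (Suc q)"
proof -
  assume w: "w \<in> IGpow G q" and y: "y \<in> carrier G"
  have wf: "w \<in> free (carrier G)" using w by (rule IG_free')
  have "cG \<one> y w - w = gmul G w (delta y - delta \<one>)"
    using flin_diff[OF flin_gmul2[where G=G and u=w] fin_delta fin_delta, of y "\<one>"]
    by (simp add: cG_gmul[OF wf one_closed y] gmul_one_right[OF wf] gmul_one_left[OF wf])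
  also have "\<dots> \<in> IGpow G (q + Suc 0)" by (rule IG_mult[OF w aug_IG1[OF delta_aug[OF y]]])
  finally show ?thesis by simp
qed

lemma genA_lin2: "v1 \<in> fin \<Longrightarrow> genA a v1 v2 = lin (\<lambda>h. lin (\<lambda>g. delta (ract (lact g a) h)) v1) v2"
  by (rule trans[OF genA_lin lin_swap])

lemma genA_diff1: "v1 \<in> fin \<Longrightarrow> v1' \<in> fin \<Longrightarrow> genA a v1 v2 - genA a v1' v2 = genA a (v1 - v1') v2"
  by (simp only: genA_lin fin_diff flin_diff[OF flin_lin])

lemma genA_diff2: "v1 \<in> fin \<Longrightarrow> v2 \<in> fin \<Longrightarrow> v2' \<in> fin \<Longrightarrow> genA a v1 v2 - genA a v1 v2' = genA a v1 (v2 - v2')"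
  by (simp only: genA_lin2 flin_diff[OF flin_lin])

lemma FA_gen_map:
  fixes L :: "('a \<Rightarrow> 'k::field) \<Rightarrow> ('c \<Rightarrow> 'k)" and u :: "'a \<Rightarrow> 'k"
  assumes L: "flin L" and V: "fvs.subspace V" and u: "u \<in> FA p"
    and gen: "\<And>(v1::'g \<Rightarrow> 'k) v2 a k. k \<le> p \<Longrightarrow> a \<in> A \<Longrightarrow> v1 \<in> IGpow G k \<Longrightarrow> v2 \<in> IGpow G (p - k) \<Longrightarrow> L (genA a v1 v2) \<in> V"
  shows "L u \<in> V"
proof (rule flin_span[OF L _ V])
  show "u \<in> fvs.span {genA a v1 v2 | v1 v2 a k. k \<le> p \<and> a \<in> A \<and> v1 \<in> IGpow G k \<and> v2 \<in> IGpow G (p - k)}"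
    using u unfolding FA_gens .
  show "{genA a v1 v2 | v1 v2 a k. k \<le> p \<and> a \<in> A \<and> v1 \<in> IGpow G k \<and> v2 \<in> IGpow G (p - k)} \<subseteq> fin"
    using genA_free free_fin IG_free' by blast
  fix x :: "'a \<Rightarrow> 'k" assume "x \<in> {genA a v1 v2 | v1 v2 a k. k \<le> p \<and> a \<in> A \<and> v1 \<in> IGpow G k \<and> v2 \<in> IGpow G (p - k)}"
  then show "L x \<in> V" using gen by blast
qed

lemma cA_left:
  fixes u :: "'a \<Rightarrow> 'k::field"
  shows "u \<in> FA p \<Longrightarrow> y \<in> carrier G \<Longrightarrow> cA y \<one> u - u \<in> FA (Suc p)"
proof -
  assume u: "u \<in> FA p" and y: "y \<in> carrier G"
  show ?thesis
  proof (rule FA_gen_map[OF flin_minus[OF flin_cA flin_id] FA_subspace u])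
    fix v1 v2 :: "'g \<Rightarrow> 'k" and a k assume k: "k \<le> p" and a: "a \<in> A" and v1: "v1 \<in> IGpow G k" and v2: "v2 \<in> IGpow G (p - k)"
    have v1f: "v1 \<in> free (carrier G)" and v2f: "v2 \<in> free (carrier G)" using v1 v2 by (auto intro: IG_free')
    have fd: "gmul G (delta y) v1 \<in> fin" using gmul_free[OF delta_free[OF y] v1f] by (rule free_fin')
    have "cA y \<one> (genA a v1 v2) - genA a v1 v2 = genA a (gmul G (delta y) v1 - v1) v2"
      by (simp add: cA_genA[OF y one_closed a v1f v2f] gmul_one_right[OF v2f] genA_diff1[OF fd free_fin'[OF v1f]])
    also have "gmul G (delta y) v1 - v1 = gmul G (delta y - delta \<one>) v1"
      using flin_diff[OF flin_gmul1[where G=G and v=v1] fin_delta fin_delta, of y "\<one>"]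
      by (simp add: gmul_one_left[OF v1f])
    also have "genA a (gmul G (delta y - delta \<one>) v1) v2 \<in> FA (Suc p)"
    proof (rule genA_in[OF _ a])
      show "gmul G (delta y - delta \<one>) v1 \<in> IGpow G (Suc k)"
        using IG_mult[OF aug_IG1[OF delta_aug[OF y]] v1] by simp
      show "v2 \<in> IGpow G (Suc p - Suc k)" using v2 by simp
    qed (use k in simp)
    finally show "cA y \<one> (genA a v1 v2) - genA a v1 v2 \<in> FA (Suc p)" .
  qed
qed

lemma cA_right:
  fixes u :: "'a \<Rightarrow> 'k::field"
  shows "u \<in> FA p \<Longrightarrow> y \<in> carrier G \<Longrightarrow> cA \<one> y u - u \<in> FA (Suc p)"
proof -
  assume u: "u \<in> FA p" and y: "y \<in> carrier G"
  show ?thesis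
  proof (rule FA_gen_map[OF flin_minus[OF flin_cA flin_id] FA_subspace u])
    fix v1 v2 :: "'g \<Rightarrow> 'k" and a k assume k: "k \<le> p" and a: "a \<in> A" and v1: "v1 \<in> IGpow G k" and v2: "v2 \<in> IGpow G (p - k)"
    have v1f: "v1 \<in> free (carrier G)" and v2f: "v2 \<in> free (carrier G)" using v1 v2 by (auto intro: IG_free')
    have fd: "gmul G v2 (delta y) \<in> fin" using gmul_free[OF v2f delta_free[OF y]] by (rule free_fin')
    have "cA \<one> y (genA a v1 v2) - genA a v1 v2 = genA a v1 (gmul G v2 (delta y) - v2)"
      by (simp add: cA_genA[OF one_closed y a v1f v2f] gmul_one_left[OF v1f]
          genA_diff2[OF free_fin'[OF v1f] fd free_fin'[OF v2f]])
    also have "gmul G v2 (delta y) - v2 = gmul G v2 (delta y - delta \<one>)"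
      using flin_diff[OF flin_gmul2[where G=G and u=v2] fin_delta fin_delta, of y "\<one>"]
      by (simp add: gmul_one_right[OF v2f])
    also have "genA a v1 (gmul G v2 (delta y - delta \<one>)) \<in> FA (Suc p)"
    proof (rule genA_in[OF _ a v1])
      show "gmul G v2 (delta y - delta \<one>) \<in> IGpow G (Suc p - k)"
        using IG_mult[OF v2 aug_IG1[OF delta_aug[OF y]]] k by (simp add: Suc_diff_le)
    qed (use k in simp)
    finally show "cA \<one> y (genA a v1 v2) - genA a v1 v2 \<in> FA (Suc p)" .
  qed
qed

abbreviation MM :: "nat \<Rightarrow> ('a \<times> 'g \<Rightarrow> 'k::field) set" where "MM \<equiv> tFil FA (IGpow G)"

lemma MM_subspace: "fvs.subspace (MM j)" by (rule tFil_subspace)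

lemma MM_free: "MM j \<subseteq> free (A \<times> carrier G)"
proof
  fix X assume X: "X \<in> MM j"
  have "(\<lambda>x. x) X \<in> free (A \<times> carrier G)"
    by (rule tFil_map[OF FA_filt IG_filt flin_id free_subspace X])
       (use FA_free IG_free' in \<open>auto intro!: tens_free\<close>)
  then show "X \<in> free (A \<times> carrier G)" by simp
qed

lemma MM_free': "X \<in> MM j \<Longrightarrow> X \<in> free (A \<times> carrier G)" using MM_free by blast

lemma Conj_M:
  fixes X :: "'a \<times> 'g \<Rightarrow> 'k::field"
  assumes g: "g \<in> carrier G" and h: "h \<in> carrier G" and X: "X \<in> MM j"
  shows "Conj g h X \<in> MM j"
proof (rule tFil_map[OF FA_filt IG_filt flin_Conj MM_subspace X])
  fix p and u :: "'a \<Rightarrow> 'k" and w :: "'g \<Rightarrow> 'k"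
  assume p: "p \<le> j" and u: "u \<in> FA p" and w: "w \<in> IGpow G (j - p)"
  have uf: "u \<in> fin" and wf: "w \<in> fin" using u w FA_fin IG_fin by auto
  show "Conj g h (tens u w) \<in> MM j"
    unfolding Conj_tens[OF uf wf] using cA_FA[OF g h u] cG_IG[OF w g h] p by (rule tens_in_tFil[rotated 1])
qed

lemma Conj_left:
  fixes X :: "'a \<times> 'g \<Rightarrow> 'k::field"
  assumes y: "y \<in> carrier G" and X: "X \<in> MM j"
  shows "Conj y \<one> X - X \<in> MM (Suc j)"
proof (rule tFil_map[OF FA_filt IG_filt flin_minus[OF flin_Conj flin_id] MM_subspace X])
  fix p and u :: "'a \<Rightarrow> 'k" and w :: "'g \<Rightarrow> 'k"
  assume p: "p \<le> j" and u: "u \<in> FA p" and w: "w \<in> IGpow G (j - p)"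
  have uf: "u \<in> fin" and wf: "w \<in> fin" using u w FA_fin IG_fin by auto
  have e: "Conj y \<one> (tens u w) - tens u w = tens (cA y \<one> u - u) (cG y \<one> w) + tens u (cG y \<one> w - w)"
    unfolding Conj_tens[OF uf wf] tens_sub_split by (simp add: tens_diff1 tens_diff2)
  have a: "tens (cA y \<one> u - u) (cG y \<one> w) \<in> MM (Suc j)"
    by (rule tens_in_tFil[of "Suc p"]) (use p cA_left[OF u y] cG_IG[OF w y one_closed] in auto)
  have b: "tens u (cG y \<one> w - w) \<in> MM (Suc j)"
    by (rule tens_in_tFil[of p]) (use p u cG_left[OF w y] in \<open>auto simp: Suc_diff_le\<close>)
  show "Conj y \<one> (tens u w) - tens u w \<in> MM (Suc j)"
    unfolding e by (rule fvs.subspace_add[OF MM_subspace a b])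
qed

lemma Conj_right:
  fixes X :: "'a \<times> 'g \<Rightarrow> 'k::field"
  assumes y: "y \<in> carrier G" and X: "X \<in> MM j"
  shows "Conj \<one> y X - X \<in> MM (Suc j)"
proof (rule tFil_map[OF FA_filt IG_filt flin_minus[OF flin_Conj flin_id] MM_subspace X])
  fix p and u :: "'a \<Rightarrow> 'k" and w :: "'g \<Rightarrow> 'k"
  assume p: "p \<le> j" and u: "u \<in> FA p" and w: "w \<in> IGpow G (j - p)"
  have uf: "u \<in> fin" and wf: "w \<in> fin" using u w FA_fin IG_fin by auto
  have e: "Conj \<one> y (tens u w) - tens u w = tens (cA \<one> y u - u) (cG \<one> y w) + tens u (cG \<one> y w - w)"
    unfolding Conj_tens[OF uf wf] tens_sub_split by (simp add: tens_diff1 tens_diff2)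
  have a: "tens (cA \<one> y u - u) (cG \<one> y w) \<in> MM (Suc j)"
    by (rule tens_in_tFil[of "Suc p"]) (use p cA_right[OF u y] cG_IG[OF w one_closed y] in auto)
  have b: "tens u (cG \<one> y w - w) \<in> MM (Suc j)"
    by (rule tens_in_tFil[of p]) (use p u cG_right[OF w y] in \<open>auto simp: Suc_diff_le\<close>)
  show "Conj \<one> y (tens u w) - tens u w \<in> MM (Suc j)"
    unfolding e by (rule fvs.subspace_add[OF MM_subspace a b])
qed

lemma act_comp:
  assumes g: "g \<in> carrier G" and g': "g' \<in> carrier G" and h: "h \<in> carrier G" and h': "h' \<in> carrier G" and x: "x \<in> A"
  shows "ract (lact g (ract (lact g' x) h')) h = ract (lact (g \<otimes> g') x) (h' \<otimes> h)"
proof -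
  have "ract (lact g (ract (lact g' x) h')) h = ract (ract (lact g (lact g' x)) h') h"
    using act_mult(3)[OF g h' act_closed(1)[OF g' x]] by simp
  also have "\<dots> = ract (lact (g \<otimes> g') x) (h' \<otimes> h)"
    using act_mult(2)[OF h' h, of "lact g (lact g' x)"] act_mult(1)[OF g g' x]
      act_closed[OF g act_closed(1)[OF g' x]] by simp
  finally show ?thesis .
qed

lemma Conj_comp:
  assumes X: "X \<in> free (A \<times> carrier G)" and g: "g \<in> carrier G" and g': "g' \<in> carrier G"
    and h: "h \<in> carrier G" and h': "h' \<in> carrier G"
  shows "Conj g h (Conj g' h' X) = Conj (g \<otimes> g') (h' \<otimes> h) X"
proof -
  have Xf: "X \<in> fin" using X by (rule free_fin')
  have "Conj g h (Conj g' h' X) = lin (\<lambda>xy. tens (cA g h (cA g' h' (delta (fst xy)))) (cG g h (cG g' h' (delta (snd xy))))) X"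
    unfolding Conj_def by (rule tmap_comp[OF flin_cA flin_cG Xf]) (simp_all add: cA_def cG_def)
  also have "\<dots> = Conj (g \<otimes> g') (h' \<otimes> h) X"
    unfolding Conj_def tmap_def
  proof (rule lin_fun_cong)
    fix xy assume "xy \<in> supp X"
    then have x: "fst xy \<in> A" and y: "snd xy \<in> carrier G" using X by (auto simp: free_def)
    show "tens (cA g h (cA g' h' (delta (fst xy)))) (cG g h (cG g' h' (delta (snd xy)))) =
        tens (cA (g \<otimes> g') (h' \<otimes> h) (delta (fst xy))) (cG (g \<otimes> g') (h' \<otimes> h) (delta (snd xy)))"
      using act_comp[OF g g' h h' x] g g' h h' y by (simp add: cA_def cG_def m_assoc)
  qed
  finally show ?thesis .
qed

definition EL :: "('g \<Rightarrow> 'k::field) \<Rightarrow> ('a \<times> 'g \<Rightarrow> 'k) \<Rightarrow> ('a \<times> 'g \<Rightarrow> 'k)" where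
  "EL v X = lin (\<lambda>g. Conj g \<one> X) v"

definition ER :: "('a \<times> 'g \<Rightarrow> 'k::field) \<Rightarrow> ('g \<Rightarrow> 'k) \<Rightarrow> ('a \<times> 'g \<Rightarrow> 'k)" where
  "ER X v = lin (\<lambda>h. Conj \<one> h X) v"

lemma Conj_fin: "X \<in> fin \<Longrightarrow> Conj g h X \<in> fin"
  unfolding Conj_def tmap_def by (rule lin_fin) (auto simp: cA_def cG_def)

lemma EL_aug:
  fixes X :: "'a \<times> 'g \<Rightarrow> 'k::field"
  assumes i: "i \<in> augI G" and X: "X \<in> MM j"
  shows "EL i X \<in> MM (Suc j)"
proof -
  have "EL i X = lin (\<lambda>y. Conj y \<one> X - X) i"
    unfolding EL_def lin_fun_diff lin_const using i by (simp add: augI_eps)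
  also have "\<dots> \<in> MM (Suc j)"
    by (rule lin_in_subspace[OF MM_subspace]) (use Conj_left X free_supp[OF augI_free'[OF i]] in auto)
  finally show ?thesis .
qed

lemma ER_aug:
  fixes X :: "'a \<times> 'g \<Rightarrow> 'k::field"
  assumes i: "i \<in> augI G" and X: "X \<in> MM j"
  shows "ER X i \<in> MM (Suc j)"
proof -
  have "ER X i = lin (\<lambda>y. Conj \<one> y X - X) i"
    unfolding ER_def lin_fun_diff lin_const using i by (simp add: augI_eps)
  also have "\<dots> \<in> MM (Suc j)"
    by (rule lin_in_subspace[OF MM_subspace]) (use Conj_right X free_supp[OF augI_free'[OF i]] in auto)
  finally show ?thesis .
qed

lemma EL_gmul:
  fixes X :: "'a \<times> 'g \<Rightarrow> 'k::field"
  assumes u: "u \<in> free (carrier G)" and i: "i \<in> free (carrier G)" and X: "X \<in> free (A \<times> carrier G)"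
  shows "EL (gmul G u i) X = EL u (EL i X)"
proof -
  have uf: "u \<in> fin" and iff: "i \<in> fin" and Xf: "X \<in> fin" using u i X by (auto intro: free_fin')
  have "EL (gmul G u i) X = lin (\<lambda>x. lin (\<lambda>g. Conj g \<one> X) (lin (\<lambda>y. delta (x \<otimes> y)) i)) u"
    unfolding EL_def gmul_as_lin by (rule lin_lin[OF uf]) (use iff in \<open>auto intro!: lin_fin\<close>)
  also have "\<dots> = lin (\<lambda>x. lin (\<lambda>y. Conj x \<one> (Conj y \<one> X)) i) u"
  proof (rule lin_fun_cong)
    fix x assume x: "x \<in> supp u"
    show "lin (\<lambda>g. Conj g \<one> X) (lin (\<lambda>y. delta (x \<otimes> y)) i) = lin (\<lambda>y. Conj x \<one> (Conj y \<one> X)) i"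
      by (subst lin_lin[OF iff], simp, rule lin_fun_cong)
         (use x free_supp[OF u] free_supp[OF i] in \<open>auto simp: Conj_comp[OF X]\<close>)
  qed
  also have "\<dots> = EL u (EL i X)"
    unfolding EL_def by (intro lin_fun_cong flin_lin_apply[OF flin_Conj iff, symmetric] Conj_fin Xf)
  finally show ?thesis .
qed

lemma ER_gmul:
  fixes X :: "'a \<times> 'g \<Rightarrow> 'k::field"
  assumes w: "w \<in> free (carrier G)" and i: "i \<in> free (carrier G)" and X: "X \<in> free (A \<times> carrier G)"
  shows "ER X (gmul G w i) = ER (ER X w) i"
proof -
  have wf: "w \<in> fin" and iff: "i \<in> fin" and Xf: "X \<in> fin" using w i X by (auto intro: free_fin')
  have "ER X (gmul G w i) = lin (\<lambda>x. lin (\<lambda>h. Conj \<one> h X) (lin (\<lambda>y. delta (x \<otimes> y)) i)) w"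
    unfolding ER_def gmul_as_lin by (rule lin_lin[OF wf]) (use iff in \<open>auto intro!: lin_fin\<close>)
  also have "\<dots> = lin (\<lambda>x. lin (\<lambda>y. Conj \<one> y (Conj \<one> x X)) i) w"
  proof (rule lin_fun_cong)
    fix x assume x: "x \<in> supp w"
    show "lin (\<lambda>h. Conj \<one> h X) (lin (\<lambda>y. delta (x \<otimes> y)) i) = lin (\<lambda>y. Conj \<one> y (Conj \<one> x X)) i"
      by (subst lin_lin[OF iff], simp, rule lin_fun_cong)
         (use x free_supp[OF w] free_supp[OF i] in \<open>auto simp: Conj_comp[OF X]\<close>)
  qed
  also have "\<dots> = lin (\<lambda>y. lin (\<lambda>x. Conj \<one> y (Conj \<one> x X)) w) i" by (rule lin_swap)
  also have "\<dots> = ER (ER X w) i"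
    unfolding ER_def by (intro lin_fun_cong flin_lin_apply[OF flin_Conj wf, symmetric] Conj_fin Xf)
  finally show ?thesis .
qed

lemma EL_MM:
  fixes X :: "'a \<times> 'g \<Rightarrow> 'k::field" and v :: "'g \<Rightarrow> 'k"
  shows "v \<in> IGpow G k \<Longrightarrow> X \<in> MM j \<Longrightarrow> EL v X \<in> MM (j + k)"
proof (induction k arbitrary: v X j)
  case 0
  then show ?case unfolding EL_def
    by (intro lin_in_subspace[OF MM_subspace]) (auto intro!: Conj_M intro: free_supp')
next
  case (Suc k)
  let ?S = "{gmul G u v |u v. u \<in> IGpow G k \<and> v \<in> augI G} :: ('g \<Rightarrow> 'k) set"
  have Sf: "?S \<subseteq> fin" using gen_fin by blast
  have fl: "flin (\<lambda>v. EL v X)" unfolding EL_def by (rule flin_lin)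
  show ?case
  proof (rule flin_span[OF fl Sf MM_subspace])
    show "v \<in> fvs.span ?S" using Suc.prems(1) unfolding IGpow.simps lspan_eq .
    fix x assume "x \<in> ?S"
    then obtain u i where x: "x = gmul G u i" "u \<in> IGpow G k" "i \<in> augI G" by blast
    have "EL x X = EL u (EL i X)"
      unfolding x(1) by (rule EL_gmul) (use x Suc.prems in \<open>auto intro: IG_free' augI_free' MM_free'\<close>)
    also have "\<dots> \<in> MM (Suc j + k)" by (rule Suc.IH[OF x(2) EL_aug[OF x(3) Suc.prems(2)]])
    finally show "EL x X \<in> MM (j + Suc k)" by simp
  qed
qed

lemma ER_MM:
  fixes X :: "'a \<times> 'g \<Rightarrow> 'k::field" and v :: "'g \<Rightarrow> 'k"
  shows "v \<in> IGpow G l \<Longrightarrow> X \<in> MM j \<Longrightarrow> ER X v \<in> MM (j + l)"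
proof (induction l arbitrary: v)
  case 0
  then show ?case unfolding ER_def
    by (intro lin_in_subspace[OF MM_subspace]) (auto intro!: Conj_M intro: free_supp')
next
  case (Suc l)
  let ?S = "{gmul G u v |u v. u \<in> IGpow G l \<and> v \<in> augI G} :: ('g \<Rightarrow> 'k) set"
  have Sf: "?S \<subseteq> fin" using gen_fin by blast
  have fl: "flin (\<lambda>v. ER X v)" unfolding ER_def by (rule flin_lin)
  show ?case
  proof (rule flin_span[OF fl Sf MM_subspace])
    show "v \<in> fvs.span ?S" using Suc.prems(1) unfolding IGpow.simps lspan_eq .
    fix x assume "x \<in> ?S"
    then obtain w i where x: "x = gmul G w i" "w \<in> IGpow G l" "i \<in> augI G" by blast
    have "ER X x = ER (ER X w) i"
      unfolding x(1) by (rule ER_gmul) (use x Suc.prems in \<open>auto intro: IG_free' augI_free' MM_free'\<close>)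
    also have "\<dots> \<in> MM (Suc (j + l))" by (rule ER_aug[OF x(3) Suc.IH[OF x(2) Suc.prems(2)]])
    finally show "ER X x \<in> MM (j + Suc l)" by simp
  qed
qed

definition Dmap :: "('a \<Rightarrow> 'k::field) \<Rightarrow> ('a \<times> 'g \<Rightarrow> 'k)" where
  "Dmap u = swapf (coactGA s u) - coactAG t u"

lemma Dmap_lin: "u \<in> fin \<Longrightarrow> Dmap u = lin (\<lambda>b. tens (delta b) (delta (s b) - delta (t b))) u"
proof (rule ext, clarify)
  fix b x assume u: "u \<in> fin"
  have "lin (\<lambda>b. tens (delta b) (delta (s b) - delta (t b))) u (b, x)
      = (\<Sum>b'\<in>supp u. if b' = b then u b * ((if x = s b then 1 else 0) - (if x = t b then 1 else 0)) else 0)"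
    unfolding lin_def by (intro sum.cong refl) (auto simp: tens_apply delta_def minus_apply)
  also have "\<dots> = (if b \<in> supp u then u b * ((if x = s b then 1 else 0) - (if x = t b then 1 else 0)) else 0)"
    using u by (simp add: fin_iff sum.delta')
  also have "\<dots> = Dmap u (b, x)"
    by (auto simp: Dmap_def swapf_def coactGA_def coactAG_def minus_apply)
  finally show "Dmap u (b, x) = lin (\<lambda>b. tens (delta b) (delta (s b) - delta (t b))) u (b, x)" by simp
qed

lemma flin_Dmap: "flin Dmap"
  unfolding flin_def by (simp add: Dmap_lin lin_add lin_sc fin_sc fin_add)

lemma delta_diff_aug: "x \<in> carrier G \<Longrightarrow> y \<in> carrier G \<Longrightarrow> (delta x - delta y :: 'g \<Rightarrow> 'k::field) \<in> augI G"
  unfolding augI_eps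
  by (auto intro!: fvs.subspace_diff[OF free_subspace] delta_free simp: eps_diff)

lemma genA_one: "a \<in> A \<Longrightarrow> genA a (delta \<one>) (delta \<one>) = delta a"
  by (simp add: genA_lin act_one)

lemma X0_MM:
  assumes a: "a \<in> A"
  shows "(tens (delta a) (delta (s a) - delta (t a)) :: 'a \<times> 'g \<Rightarrow> 'k::field) \<in> MM (Suc 0)"
proof (rule tens_in_tFil[of 0])
  show "(delta a :: 'a \<Rightarrow> 'k) \<in> FA 0"
    using genA_in[of 0 0 a "delta \<one>" "delta \<one>"] a by (simp add: genA_one delta_free)
  show "(delta (s a) - delta (t a) :: 'g \<Rightarrow> 'k) \<in> IGpow G (Suc 0 - 0)"
    using delta_diff_aug[OF st_closed[OF a]] by (simp add: IG1)
qed simp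

lemma Dmap_genA:
  fixes v1 v2 :: "'g \<Rightarrow> 'k::field"
  assumes a: "a \<in> A" and v1: "v1 \<in> free (carrier G)" and v2: "v2 \<in> free (carrier G)"
  shows "Dmap (genA a v1 v2) = EL v1 (ER (tens (delta a) (delta (s a) - delta (t a))) v2)"
proof -
  let ?X = "tens (delta a) (delta (s a) - delta (t a)) :: 'a \<times> 'g \<Rightarrow> 'k"
  have f1: "v1 \<in> fin" and f2: "v2 \<in> fin" using v1 v2 by (auto intro: free_fin')
  have Xf: "?X \<in> free (A \<times> carrier G)" using MM_free'[OF X0_MM[OF a]] .
  have Xfin: "?X \<in> fin" using Xf by (rule free_fin')
  have "Dmap (genA a v1 v2) = lin (\<lambda>g. lin (\<lambda>h. Dmap (delta (ract (lact g a) h))) v2) v1"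
    unfolding genA_lin[OF f1]
    by (subst flin_lin_apply[OF flin_Dmap f1], use f2 in \<open>auto intro!: lin_fin\<close>,
        rule lin_fun_cong, subst flin_lin_apply[OF flin_Dmap f2]) auto
  also have "\<dots> = lin (\<lambda>g. lin (\<lambda>h. Conj g h ?X) v2) v1"
  proof (rule lin_fun_cong, rule lin_fun_cong)
    fix g h assume "g \<in> supp v1" "h \<in> supp v2"
    then have g: "g \<in> carrier G" and h: "h \<in> carrier G" using free_supp v1 v2 by auto
    have "Dmap (delta (ract (lact g a) h) :: 'a \<Rightarrow> 'k)
        = tens (delta (ract (lact g a) h)) (delta (s (ract (lact g a) h)) - delta (t (ract (lact g a) h)))"
      by (simp add: Dmap_lin)
    also have "\<dots> = tens (delta (ract (lact g a) h)) (delta (g \<otimes> s a \<otimes> h) - delta (g \<otimes> t a \<otimes> h))"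
      using st_equiv[OF h act_closed(1)[OF g a]] st_equiv[OF g a] by simp
    also have "\<dots> = Conj g h ?X"
      unfolding Conj_tens[OF fin_delta fin_diff[OF fin_delta fin_delta]]
      by (simp add: lin_diff_delta cA_def cG_def)
    finally show "Dmap (delta (ract (lact g a) h) :: 'a \<Rightarrow> 'k) = Conj g h ?X" .
  qed
  also have "\<dots> = lin (\<lambda>g. lin (\<lambda>h. Conj g \<one> (Conj \<one> h ?X)) v2) v1"
  proof (rule lin_fun_cong, rule lin_fun_cong)
    fix g h assume "g \<in> supp v1" "h \<in> supp v2"
    then have g: "g \<in> carrier G" and h: "h \<in> carrier G" using free_supp v1 v2 by auto
    show "Conj g h ?X = Conj g \<one> (Conj \<one> h ?X)" using Conj_comp[OF Xf g one_closed one_closed h] g h by simp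
  qed
  also have "\<dots> = EL v1 (ER ?X v2)"
    unfolding EL_def ER_def
    by (intro lin_fun_cong flin_lin_apply[OF flin_Conj f2, symmetric] Conj_fin Xfin)
  finally show ?thesis .
qed

lemma Dmap_FA:
  fixes u :: "'a \<Rightarrow> 'k::field"
  assumes u: "u \<in> FA n"
  shows "Dmap u \<in> MM (Suc n)"
proof (rule FA_gen_map[OF flin_Dmap MM_subspace u])
  fix v1 v2 :: "'g \<Rightarrow> 'k" and a k
  assume k: "k \<le> n" and a: "a \<in> A" and v1: "v1 \<in> IGpow G k" and v2: "v2 \<in> IGpow G (n - k)"
  have "ER (tens (delta a) (delta (s a) - delta (t a))) v2 \<in> MM (Suc 0 + (n - k))"
    by (rule ER_MM[OF v2 X0_MM[OF a]])
  then have "EL v1 (ER (tens (delta a) (delta (s a) - delta (t a))) v2) \<in> MM (Suc 0 + (n - k) + k)"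
    by (rule EL_MM[OF v1])
  then show "Dmap (genA a v1 v2) \<in> MM (Suc n)"
    using k by (simp add: Dmap_genA[OF a IG_free'[OF v1] IG_free'[OF v2]])
qed

lemma DQ_cocomm: "DQ_cocommutative TYPE('k::field) G A s t lact ract"
  unfolding DQ_cocommutative_def
proof (intro ballI allI impI)
  fix x :: "nat \<times> 'a \<Rightarrow> 'k" and y1 y2
  assume x: "x \<in> grRep FA"
    and r: "induced_rel FA FA (IGpow G) (coactAG t) x y1 \<and> induced_rel FA (IGpow G) FA (coactGA s) x y2"
  have xs: "slice x n \<in> FA n" for n using x by (simp add: grRep_def)
  have c: "swapf (coactGA s (slice x n)) - coactAG t (slice x n) \<in> MM (Suc n)" for n
    using Dmap_FA[OF xs[of n]] by (simp add: Dmap_def)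
  have c': "swapf (coactAG t (slice x n)) - coactGA s (slice x n) \<in> tFil (IGpow G) FA (Suc n)" for n
  proof -
    have "swapf (swapf (coactGA s (slice x n)) - coactAG t (slice x n)) \<in> tFil (IGpow G) FA (Suc n)"
      by (rule swapf_tFil[OF FA_filt IG_filt c])
    then have "- swapf (swapf (coactGA s (slice x n)) - coactAG t (slice x n)) \<in> tFil (IGpow G) FA (Suc n)"
      by (rule fvs.subspace_neg[OF tFil_subspace])
    then show ?thesis by (simp add: swapf_diff)
  qed
  have 1: "swapf y2 - y1 \<in> tZer FA (IGpow G)"
    using r by (intro cocomm_gen[OF FA_filt IG_filt _ _ c]) auto
  have 2: "swapf y1 - y2 \<in> tZer (IGpow G) FA"
    using r by (intro cocomm_gen[OF IG_filt FA_filt _ _ c']) auto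
  show "(\<lambda>z. y2 (prod.swap z)) - y1 \<in> tZer FA (IGpow G) \<and> (\<lambda>z. y1 (prod.swap z)) - y2 \<in> tZer (IGpow G) FA"
    using 1 2 by (simp add: swapf_def)
qed

end


theorem mainTheorem10:
  fixes G :: "('g, 'm) monoid_scheme" and A :: "'a set"
    and s t :: "'a \<Rightarrow> 'g" and lact :: "'g \<Rightarrow> 'a \<Rightarrow> 'a" and ract :: "'a \<Rightarrow> 'g \<Rightarrow> 'a"
  assumes "group_like_graph G A s t lact ract"
    and "path_connected G A s t"
  shows "DG_irreducible TYPE('k::field_char_0) G
       \<and> DG_cocommutative TYPE('k) G
       \<and> DQ_cocommutative TYPE('k) G A s t lact ract"
proof -
  have grp: "group G" using assms(1) by (simp add: group_like_graph_def)
  interpret g: glgraph G A s t lact ract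
    by (intro glgraph.intro glgraph_axioms.intro) (simp_all add: galg_def grp assms(1))
  show ?thesis using g.DG_irred g.DG_cocomm g.DQ_cocomm by blast
qed

end
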